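(* In the standing setting, assume (A1), (A3), (A4) and (A7), and consider the coupled chains. Then there exist $h_0>0$ and $C>0$, independent of $s,h,k$, such that for all $s\in\mathbb N_+$, $h\in(0,h_0)$ and all even $k\ge2$, $$\mathbb E|X^{f,c+}_k-X^{f,c-}_k|^4\le C\frac{h^2}{s^2}.$$
   Context: Standing setting. Let $d,n\in\mathbb N_+$, $\beta\ge0$, and let $a:\mathbb R^d\to\mathbb R^d$, $b:\mathbb R^d\times\mathbb R^n\to\mathbb R^d$ be measurable. $|\cdot|$ is the Euclidean norm (Frobenius norm for matrices), $\nabla$ the Jacobian in $x$, $D^\alpha$ the partial derivative in $x$ for a multi-index $\alpha$. For each $s\in\mathbb N_+$ a law on $\mathbb R^n$ is given; a random variable with this law is a drift variable at level $s$ (generically $U^s$), and $\mathbb E[b(x,U^s)]=a(x)$ for all $x$. All constants below are independent of $s,x,y$. (A1) $|a(x)-a(y)|\le L|x-y|$; $\langle x-y,a(x)-a(y)\rangle\le-K|x-y|^2$ with $K>0$; $a\in C^2$ with $|D^\alpha a|\le C_{a^{(|\alpha|)}}$ for $|\alpha|=1,2$. (A2) $\mathbb E|b(x,U^s)-b(y,U^s)|^2\le\bar L^2|x-y|^2$. (A3) $\mathbb E|b(x,U^s)-a(x)|^2\le\sigma_s^2(1+|x|^2)$ with $\sigma_s^2\le\kappa/s$. (A4) $\mathbb E|b(x,U^s)-a(x)|^4\le\sigma^{(4)}_s(1+|x|^4)$ with $\sigma^{(4)}_s\le\kappa/s^2$. (A5) for every $u$, $x\mapsto b(x,u)$ is $C^2$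 with $|D^\alpha b(x,u)|\le C_{b^{(2)}}$ for $|\alpha|=2$, and $\mathbb E|\nabla b(x,U^s)-\nabla a(x)|^4\le\sigma^{(4)}_s(1+|x|^4)$. (A6) $\mathbb E[D^\alpha b(x,U^s)]=D^\alpha a(x)$ for $|\alpha|\le2$. (A7) $|a(x)|^4\le L_0^{(4)}(1+|x|^4)$. (A8) every drift variable $U^{2s}$ at level $2s$ determines (measurably) two drift variables $U^{2s,1},U^{2s,2}$ at level $s$ with $b(x,U^{2s})=\frac12b(x,U^{2s,1})+\frac12b(x,U^{2s,2})$ for all $x$. Coupled chains. Fix $s\in\mathbb N_+$, $h>0$. Let $(Z_k)_{k\ge1}$ be i.i.d. $N(0,I_d)$, $(U^f_k)_{k\ge0}$ i.i.d. drift variables at level $2s$, and $X_0$ an $\mathbb R^d$-valued random variable with $\mathbb E|X_0|^4<\infty$, all independent; let $U^{f,1}_k,U^{f,2}_k$ be the level-$s$ variables given by (A8). Put $V^f_k=U^f_k$, $V^{c-}_k=U^{f,1}_k$, $V^{c+}_k=U^{f,2}_k$. For $j\in\{f,c-,c+\}$, all chains start at $X_0$: $X^{j,f}_{k+1}=X^{j,f}_k+hb(X^{j,f}_k,V^j_k)+\beta\sqrt hZ_{k+1}$ ($k\ge0$); for even $k\ge0$: $X^{j,c-}_{k+2}=X^{j,c-}_k+2hb(X^{j,c-}_k,V^j_k)+\beta\sqrt h(Z_{k+1}+Z_{k+2})$, $X^{j,c+}_{k+2}=X^{j,c+}_k+2hb(X^{j,c+}_k,V^j_{k+1})+\beta\sqrt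 h(Z_{k+1}+Z_{k+2})$. Exact-drift chains from $X_0$: $X_{k+1}=X_k+ha(X_k)+\beta\sqrt hZ_{k+1}$ and, for even $k$, $X^c_{k+2}=X^c_k+2ha(X^c_k)+\beta\sqrt h(Z_{k+1}+Z_{k+2})$. Averages: $\bar X^{j,c}_k=\frac12(X^{j,c-}_k+X^{j,c+}_k)$, $\bar X^{c,f}_k=\frac12(X^{c-,f}_k+X^{c+,f}_k)$. *)

theory Defs
  imports "HOL-Analysis.Analysis" "HOL-Probability.Probability"
begin

definition std_normal_vec :: "'d::euclidean_space measure" where
  "std_normal_vec = distr (PiM Basis (\<lambda>_. density lborel std_normal_density)) borel
                       (\<lambda>f. \<Sum>b\<in>Basis. f b *\<^sub>R b)"

datatype src = SrcX0 | SrcZ nat | SrcU nat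

text \<open>Mutual independence of X0, (Z_k)_k, (U_k)_k: independence of the generated sigma-algebras
  (this is what indep_vars unfolds to, for variables with different codomains).\<close>
definition inputs_indep ::
  "'a measure \<Rightarrow> ('a \<Rightarrow> 'd::euclidean_space) \<Rightarrow> (nat \<Rightarrow> 'a \<Rightarrow> 'd) \<Rightarrow> (nat \<Rightarrow> 'a \<Rightarrow> 'u::euclidean_space) \<Rightarrow> bool" where
  "inputs_indep M X0 Z U \<longleftrightarrow>
     prob_space.indep_sets M
       (\<lambda>i. case i of
              SrcX0 \<Rightarrow> {X0 -` A \<inter> space M | A. A \<in> sets borel}
            | SrcZ k \<Rightarrow> {Z k -` A \<inter> space M | A. A \<in> sets borel}
            | SrcU k \<Rightarrow> {U k -` A \<inter> space M | A. A \<in> sets borel}) (UNIV - {SrcZ 0})"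

text \<open>Coarse chain (step 2h) driven by the drift variables V, started at X0.
  coarse_chain b beta h X0 Z V off m = X at time k = 2m, where the drift variable used in the
  step from k to k+2 is V (k + off): off = 0 gives the c- chain, off = 1 the c+ chain.\<close>
fun coarse_chain ::
  "('d::euclidean_space \<Rightarrow> 'u \<Rightarrow> 'd) \<Rightarrow> real \<Rightarrow> real \<Rightarrow> ('a \<Rightarrow> 'd) \<Rightarrow> (nat \<Rightarrow> 'a \<Rightarrow> 'd)
     \<Rightarrow> (nat \<Rightarrow> 'a \<Rightarrow> 'u) \<Rightarrow> nat \<Rightarrow> nat \<Rightarrow> 'a \<Rightarrow> 'd" where
  "coarse_chain b \<beta> h X0 Z V off 0 \<omega> = X0 \<omega>"
| "coarse_chain b \<beta> h X0 Z V off (Suc m) \<omega> =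
     (let x = coarse_chain b \<beta> h X0 Z V off m \<omega>
      in x + (2 * h) *\<^sub>R b x (V (2 * m + off) \<omega>)
           + (\<beta> * sqrt h) *\<^sub>R (Z (2 * m + 1) \<omega> + Z (2 * m + 2) \<omega>))"

end

theory Submission
  imports Defs
begin


definition inpE :: "'a measure \<Rightarrow> ('a \<Rightarrow> 'd::euclidean_space) \<Rightarrow> (nat \<Rightarrow> 'a \<Rightarrow> 'd) \<Rightarrow> (nat \<Rightarrow> 'a \<Rightarrow> 'u::euclidean_space) \<Rightarrow> src \<Rightarrow> 'a set set" where
  "inpE M X0 Z U i = (case i of
              SrcX0 \<Rightarrow> {X0 -` A \<inter> space M | A. A \<in> sets borel}
            | SrcZ k \<Rightarrow> {Z k -` A \<inter> space M | A. A \<in> sets borel}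
            | SrcU k \<Rightarrow> {U k -` A \<inter> space M | A. A \<in> sets borel})"

lemma inputs_indep_alt: "inputs_indep M X0 Z U \<longleftrightarrow> prob_space.indep_sets M (inpE M X0 Z U) (UNIV - {SrcZ 0})"
  unfolding inputs_indep_def inpE_def by simp

definition Msig where "Msig M X0 Z U A = sigma (space M) (\<Union>i\<in>A. inpE M X0 Z U i)"

lemma inpE_sub:
  assumes "X0 \<in> borel_measurable M" "\<And>k. Z k \<in> borel_measurable M" "\<And>k. U k \<in> borel_measurable M"
  shows "inpE M X0 Z U i \<subseteq> sets M"
  using assms by (auto simp: inpE_def split: src.splits)

lemma inpE_Int_stable: "Int_stable (inpE M X0 Z U i)"
  unfolding inpE_def Int_stable_def
  apply (auto split: src.splits)
  apply (rule_tac x="A \<inter> Aa" in exI, auto)+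
  done

lemma Msig_space: "space (Msig M X0 Z U A) = space M"
  unfolding Msig_def by (rule space_measure_of_conv)

lemma Msig_sets: "sets (Msig M X0 Z U A) = sigma_sets (space M) (\<Union>i\<in>A. inpE M X0 Z U i)"
  unfolding Msig_def by (rule sets_measure_of) (auto simp: inpE_def split: src.splits)

lemma Msig_meas_M:
  assumes "X0 \<in> borel_measurable M" "\<And>k. Z k \<in> borel_measurable M" "\<And>k. U k \<in> borel_measurable M"
    and "V \<in> measurable (Msig M X0 Z U A) N"
  shows "V \<in> measurable M N"
proof (rule measurableI)
  show "x \<in> space M \<Longrightarrow> V x \<in> space N" for x using assms(4) Msig_space measurable_space by metis
  fix B assume "B \<in> sets N"
  then have "V -` B \<inter> space M \<in> sigma_sets (space M) (\<Union>i\<in>A. inpE M X0 Z U i)"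
    using assms(4) Msig_space Msig_sets measurable_sets by metis
  moreover have E: "\<And>i. inpE M X0 Z U i \<subseteq> sets M" by (rule inpE_sub) (use assms in auto)
  have "sigma_sets (space M) (\<Union>i\<in>A. inpE M X0 Z U i) \<subseteq> sets M"
    by (rule sets.sigma_sets_subset) (use E in auto)
  ultimately show "V -` B \<inter> space M \<in> sets M" by blast
qed

lemma X0_Msig: "SrcX0 \<in> A \<Longrightarrow> X0 \<in> measurable (Msig M X0 Z U A) borel"
  apply (rule measurableI)
   apply (simp add: Msig_space)
  apply (simp add: Msig_sets)
  apply (rule sigma_sets.Basic)
  apply (rule UN_I[of SrcX0]) apply simp
  apply (auto simp: inpE_def Msig_space)
  done

lemma Z_Msig: "SrcZ k \<in> A \<Longrightarrow> Z k \<in> measurable (Msig M X0 Z U A) borel"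
  apply (rule measurableI)
   apply (simp add: Msig_space)
  apply (simp add: Msig_sets)
  apply (rule sigma_sets.Basic)
  apply (rule UN_I[of "SrcZ k"]) apply simp
  apply (auto simp: inpE_def Msig_space)
  done

lemma U_Msig: "SrcU k \<in> A \<Longrightarrow> U k \<in> measurable (Msig M X0 Z U A) borel"
  apply (rule measurableI)
   apply (simp add: Msig_space)
  apply (simp add: Msig_sets)
  apply (rule sigma_sets.Basic)
  apply (rule UN_I[of "SrcU k"]) apply simp
  apply (auto simp: inpE_def Msig_space)
  done

lemma indep_step:
  fixes V :: "'a \<Rightarrow> 'v::topological_space" and W :: "'a \<Rightarrow> 'w::topological_space"
  assumes P: "prob_space M" and ind: "inputs_indep M X0 Z U"
    and rv: "X0 \<in> borel_measurable M" "\<And>k. Z k \<in> borel_measurable M" "\<And>k. U k \<in> borel_measurable M"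
    and iA: "i \<notin> A" "i \<noteq> SrcZ 0" "SrcZ 0 \<notin> A"
    and V: "V \<in> measurable (Msig M X0 Z U A) borel"
    and Wi: "inpE M X0 Z U i = {W -` B \<inter> space M | B. B \<in> sets borel}"
    and W: "W \<in> borel_measurable M"
    and f: "f \<in> borel_measurable (borel \<Otimes>\<^sub>M borel)"
  shows "(\<integral>\<^sup>+\<omega>. f (V \<omega>, W \<omega>) \<partial>M) = (\<integral>\<^sup>+v. (\<integral>\<^sup>+w. f (v,w) \<partial>distr M borel W) \<partial>distr M borel V)"
proof -
  interpret prob_space M by (rule P)
  have VM: "V \<in> borel_measurable M" by (rule Msig_meas_M[OF rv V])
  let ?I = "case_bool A {i}"
  have "indep_sets (\<lambda>j. sigma_sets (space M) (\<Union>k\<in>?I j. inpE M X0 Z U k)) UNIV"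
  proof (rule indep_sets_collect_sigma)
    show "indep_sets (inpE M X0 Z U) (\<Union>j. ?I j)"
      using ind unfolding inputs_indep_alt
      by (rule indep_sets_mono_index[rotated]) (use iA in \<open>auto split: bool.splits\<close>)
    show "Int_stable (inpE M X0 Z U k)" for k by (rule inpE_Int_stable)
    show "disjoint_family_on ?I UNIV" using iA unfolding disjoint_family_on_def by (auto split: bool.splits)
  qed
  then have ind3: "indep_set (sigma_sets (space M) (\<Union>k\<in>A. inpE M X0 Z U k)) (sigma_sets (space M) (inpE M X0 Z U i))"
    unfolding indep_set_def by (rule indep_sets_mono_sets) (auto split: bool.splits)
  interpret PV: prob_space "distr M borel V" by (rule prob_space_distr[OF VM])
  interpret PW: prob_space "distr M borel W" by (rule prob_space_distr[OF W])
  interpret PP: pair_sigma_finite "distr M borel V" "distr M borel W" ..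
  have XY: "(\<lambda>x. (V x, W x)) \<in> measurable M (borel \<Otimes>\<^sub>M borel)"
    using VM W by (rule measurable_Pair)
  have eq: "distr M borel V \<Otimes>\<^sub>M distr M borel W = distr M (borel \<Otimes>\<^sub>M borel) (\<lambda>x. (V x, W x))"
  proof (rule pair_measure_eqI)
    show "sigma_finite_measure (distr M borel V)" ..
    show "sigma_finite_measure (distr M borel W)" ..
    fix C D assume C: "C \<in> sets (distr M borel V)" and D: "D \<in> sets (distr M borel W)"
    have CV: "V -` C \<inter> space M \<in> sigma_sets (space M) (\<Union>k\<in>A. inpE M X0 Z U k)"
      using measurable_sets[OF V, of C] C by (auto simp: Msig_space Msig_sets)
    have DW: "W -` D \<inter> space M \<in> sigma_sets (space M) (inpE M X0 Z U i)"
      using D Wi by (auto intro: sigma_sets.Basic)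
    have "emeasure (distr M (borel \<Otimes>\<^sub>M borel) (\<lambda>x. (V x, W x))) (C \<times> D) = emeasure M ((\<lambda>x. (V x, W x)) -` (C \<times> D) \<inter> space M)"
      using C D by (intro emeasure_distr[OF XY]) auto
    also have "(\<lambda>x. (V x, W x)) -` (C \<times> D) \<inter> space M = (V -` C \<inter> space M) \<inter> (W -` D \<inter> space M)" by auto
    also have "emeasure M \<dots> = emeasure M (V -` C \<inter> space M) * emeasure M (W -` D \<inter> space M)"
      using indep_setD[OF ind3 CV DW]
      by (simp add: emeasure_eq_measure measure_nonneg ennreal_mult)
    also have "\<dots> = emeasure (distr M borel V) C * emeasure (distr M borel W) D"
      using C D VM W by (simp add: emeasure_distr)
    finally show "emeasure (distr M borel V) C * emeasure (distr M borel W) D = emeasure (distr M (borel \<Otimes>\<^sub>M borel) (\<lambda>x. (V x, W x))) (C \<times> D)" by simp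
  qed simp
  have "(\<integral>\<^sup>+\<omega>. f (V \<omega>, W \<omega>) \<partial>M) = (\<integral>\<^sup>+x. f x \<partial>distr M (borel \<Otimes>\<^sub>M borel) (\<lambda>x. (V x, W x)))"
    by (subst nn_integral_distr) (use f VM W in auto)
  also have "\<dots> = (\<integral>\<^sup>+x. f x \<partial>(distr M borel V \<Otimes>\<^sub>M distr M borel W))" by (simp add: eq)
  also have "\<dots> = (\<integral>\<^sup>+v. (\<integral>\<^sup>+w. f (v,w) \<partial>distr M borel W) \<partial>distr M borel V)"
    by (rule PW.nn_integral_fst[symmetric]) (use f in \<open>simp add: measurable_cong_sets[OF sets_pair_measure_cong[OF sets_distr sets_distr] refl]\<close>)
  finally show ?thesis .
qed


abbreviation "NN \<equiv> density lborel std_normal_density"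
abbreviation "PN \<equiv> (PiM (Basis::'d::euclidean_space set) (\<lambda>_. NN))"

lemma PN_prob: "prob_space (PN :: ('d::euclidean_space \<Rightarrow> real) measure)"
  by (rule prob_space_PiM, rule prob_space_normal_density, simp)

lemma c1[measurable]: "b \<in> Basis \<Longrightarrow> (\<lambda>f. f b) \<in> borel_measurable (PN :: ('d::euclidean_space \<Rightarrow> real) measure)"
proof -
  assume "b \<in> Basis"
  then have "(\<lambda>f. f b) \<in> measurable (PN :: ('d::euclidean_space \<Rightarrow> real) measure) NN" by (rule measurable_component_singleton)
  moreover have "measurable (PN :: ('d::euclidean_space \<Rightarrow> real) measure) NN = measurable PN borel"
    by (rule measurable_cong_sets) simp_all
  ultimately show ?thesis by simp
qed

lemma F_meas: "(\<lambda>f. \<Sum>b\<in>Basis. f b *\<^sub>R b) \<in> measurable (PN :: ('d::euclidean_space \<Rightarrow> real) measure) (borel :: 'd measure)"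
  by (intro borel_measurable_sum borel_measurable_scaleR c1 borel_measurable_const)

lemma std_prob: "prob_space (std_normal_vec :: 'd::euclidean_space measure)"
  unfolding std_normal_vec_def
  by (rule prob_space.prob_space_distr[OF PN_prob F_meas])

lemma comp_distr: "(b::'d::euclidean_space) \<in> Basis \<Longrightarrow> distr (PN :: ('d \<Rightarrow> real) measure) NN (\<lambda>f. f b) = NN"
  by (rule distr_PiM_component) (auto intro: prob_space_normal_density)

lemma comp_nn:
  assumes b: "(b::'d::euclidean_space) \<in> Basis" and g: "g \<in> borel_measurable borel"
  shows "(\<integral>\<^sup>+f. g (f b) \<partial>(PN :: ('d \<Rightarrow> real) measure)) = (\<integral>\<^sup>+x. g x \<partial>NN)"
proof -
  have "(\<integral>\<^sup>+x. g x \<partial>NN) = (\<integral>\<^sup>+x. g x \<partial>distr (PN :: ('d \<Rightarrow> real) measure) NN (\<lambda>f. f b))"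
    by (simp add: comp_distr[OF b])
  also have "\<dots> = (\<integral>\<^sup>+f. g (f b) \<partial>(PN :: ('d \<Rightarrow> real) measure))"
    by (rule nn_integral_distr) (use b g in auto)
  finally show ?thesis ..
qed

lemma id_NN: "(\<lambda>x. x) \<in> borel_measurable NN"
  by (rule measurable_ident_sets) simp

lemma comp_integrable:
  assumes b: "(b::'d::euclidean_space) \<in> Basis"
  shows "integrable (PN :: ('d \<Rightarrow> real) measure) (\<lambda>f. f b)"
    and "(\<integral>f. f b \<partial>(PN :: ('d \<Rightarrow> real) measure)) = 0"
proof -
  have m: "(\<lambda>f. f b) \<in> measurable (PN :: ('d \<Rightarrow> real) measure) NN" by (rule measurable_component_singleton[OF b])
  have i1: "integrable NN (\<lambda>x. x)" using integrable_std_normal_distribution_moment[of 1] by simp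
  have "integrable (distr (PN :: ('d \<Rightarrow> real) measure) NN (\<lambda>f. f b)) (\<lambda>x. x)"
    unfolding comp_distr[OF b] by (rule i1)
  then show "integrable (PN :: ('d \<Rightarrow> real) measure) (\<lambda>f. f b)"
    using integrable_distr_eq[OF m id_NN] by simp
  have "(\<integral>f. f b \<partial>(PN :: ('d \<Rightarrow> real) measure)) = (\<integral>x. x \<partial>distr (PN :: ('d \<Rightarrow> real) measure) NN (\<lambda>f. f b))"
    by (rule integral_distr[symmetric, OF m id_NN])
  also have "\<dots> = (\<integral>x. x^1 \<partial>NN)" unfolding comp_distr[OF b] by simp
  also have "\<dots> = 0" by (rule integral_std_normal_distribution_moment_odd) simp
  finally show "(\<integral>f. f b \<partial>(PN :: ('d \<Rightarrow> real) measure)) = 0" .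
qed

lemma std_mean:
  shows "integrable (std_normal_vec :: 'd::euclidean_space measure) (\<lambda>z. z)"
    and "(\<integral>z. z \<partial>(std_normal_vec :: 'd measure)) = 0"
proof -
  have I: "integrable (PN :: ('d \<Rightarrow> real) measure) (\<lambda>f. \<Sum>b\<in>Basis. f b *\<^sub>R b)"
    by (rule Bochner_Integration.integrable_sum, rule integrable_scaleR_left, rule comp_integrable, assumption)
  show "integrable (std_normal_vec :: 'd::euclidean_space measure) (\<lambda>z. z)"
    unfolding std_normal_vec_def
    by (subst integrable_distr_eq[OF F_meas measurable_ident_sets[OF refl]]) (rule I)
  have "(\<integral>z. z \<partial>(std_normal_vec :: 'd measure)) = (\<integral>f. (\<Sum>b\<in>Basis. f b *\<^sub>R b) \<partial>(PN :: ('d \<Rightarrow> real) measure))"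
    unfolding std_normal_vec_def by (rule integral_distr[OF F_meas measurable_ident_sets[OF refl]])
  also have "\<dots> = (\<Sum>b\<in>Basis. (\<integral>f. f b *\<^sub>R b \<partial>(PN :: ('d \<Rightarrow> real) measure)))"
    by (rule Bochner_Integration.integral_sum) (rule integrable_scaleR_left, rule comp_integrable, assumption)
  also have "\<dots> = (\<Sum>b\<in>Basis. (\<integral>f. f b \<partial>(PN :: ('d \<Rightarrow> real) measure)) *\<^sub>R (b::'d))"
    by (rule sum.cong[OF refl]) (rule integral_scaleR_left, rule comp_integrable, assumption)
  also have "\<dots> = 0" by (simp add: comp_integrable)
  finally show "(\<integral>z. z \<partial>(std_normal_vec :: 'd measure)) = 0" .
qed

lemma normF: "(norm (\<Sum>b\<in>Basis. f b *\<^sub>R b :: 'd::euclidean_space))^2 = (\<Sum>b\<in>Basis. (f b)^2)"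
  unfolding power2_norm_eq_inner by (subst euclidean_inner) (simp add: power2_eq_square)

lemma NN_mom2: "(\<integral>\<^sup>+x. ennreal (x^2) \<partial>NN) = 1"
proof -
  have "(\<integral>\<^sup>+x. ennreal (x^(2*1)) \<partial>NN) = ennreal (\<integral>x. x^(2*1) \<partial>NN)"
    by (rule nn_integral_eq_integral) (use std_normal_distribution_even_moments(2)[of 1] in auto)
  also have "\<dots> = 1" by (subst std_normal_distribution_even_moments(1)) simp
  finally show ?thesis by simp
qed

lemma NN_mom4: "(\<integral>\<^sup>+x. ennreal (x^4) \<partial>NN) = 3"
proof -
  have "(\<integral>\<^sup>+x. ennreal (x^(2*2)) \<partial>NN) = ennreal (\<integral>x. x^(2*2) \<partial>NN)"
    by (rule nn_integral_eq_integral) (use std_normal_distribution_even_moments(2)[of 2] in auto)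
  also have "\<dots> = 3" by (subst std_normal_distribution_even_moments(1)) (simp add: fact_numeral)
  finally show ?thesis by simp
qed

lemma sum_sq_le: "finite A \<Longrightarrow> (\<Sum>i\<in>A. x i)^2 \<le> real (card A) * (\<Sum>i\<in>A. (x i)^2)"
  for x :: "'i \<Rightarrow> real"
  using Cauchy_Schwarz_ineq_sum[of x "\<lambda>_. 1" A] by (simp add: mult.commute)

lemma std_mom2: "(\<integral>\<^sup>+z. ennreal ((norm z)^2) \<partial>(std_normal_vec :: 'd::euclidean_space measure)) = ennreal (real DIM('d))"
proof -
  have "(\<integral>\<^sup>+z. ennreal ((norm z)^2) \<partial>(std_normal_vec :: 'd measure))
      = (\<integral>\<^sup>+f. ennreal ((norm (\<Sum>b\<in>Basis. f b *\<^sub>R b :: 'd))^2) \<partial>(PN :: ('d \<Rightarrow> real) measure))"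
    unfolding std_normal_vec_def by (rule nn_integral_distr) (use F_meas in simp_all)
  also have "\<dots> = (\<integral>\<^sup>+f. (\<Sum>b\<in>(Basis::'d set). ennreal ((f b)^2)) \<partial>(PN :: ('d \<Rightarrow> real) measure))"
    by (simp add: normF)
  also have "\<dots> = (\<Sum>b\<in>(Basis::'d set). (\<integral>\<^sup>+f. ennreal ((f b)^2) \<partial>(PN :: ('d \<Rightarrow> real) measure)))"
    by (rule nn_integral_sum) auto
  also have "\<dots> = (\<Sum>b\<in>(Basis::'d set). 1)"
    by (rule sum.cong) (auto simp: comp_nn[of _ "\<lambda>x. ennreal (x^2)"] NN_mom2)
  finally show ?thesis by (simp add: ennreal_of_nat_eq_real_of_nat)
qed

lemma std_mom4: "(\<integral>\<^sup>+z. ennreal ((norm z)^4) \<partial>(std_normal_vec :: 'd::euclidean_space measure)) \<le> ennreal (3 * (real DIM('d))^2)"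
proof -
  have "(\<integral>\<^sup>+z. ennreal ((norm z)^4) \<partial>(std_normal_vec :: 'd measure))
      = (\<integral>\<^sup>+f. ennreal ((norm (\<Sum>b\<in>Basis. f b *\<^sub>R b :: 'd))^4) \<partial>(PN :: ('d \<Rightarrow> real) measure))"
    unfolding std_normal_vec_def by (rule nn_integral_distr) (use F_meas in simp_all)
  also have "\<dots> \<le> (\<integral>\<^sup>+f. ennreal (real DIM('d)) * (\<Sum>b\<in>(Basis::'d set). ennreal ((f b)^4)) \<partial>(PN :: ('d \<Rightarrow> real) measure))"
  proof (rule nn_integral_mono)
    fix f :: "'d \<Rightarrow> real"
    have "(norm (\<Sum>b\<in>Basis. f b *\<^sub>R b :: 'd))^4 = ((\<Sum>b\<in>(Basis::'d set). (f b)^2))^2"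
      by (subst normF[symmetric]) simp
    also have "\<dots> \<le> real DIM('d) * (\<Sum>b\<in>(Basis::'d set). ((f b)^2)^2)"
      by (rule sum_sq_le) simp
    also have "\<dots> = real DIM('d) * (\<Sum>b\<in>(Basis::'d set). (f b)^4)" by simp
    finally show "ennreal ((norm (\<Sum>b\<in>Basis. f b *\<^sub>R b :: 'd))^4) \<le> ennreal (real DIM('d)) * (\<Sum>b\<in>(Basis::'d set). ennreal ((f b)^4))"
      by (simp add: ennreal_mult[symmetric] sum_nonneg)
  qed
  also have "\<dots> = ennreal (real DIM('d)) * (\<Sum>b\<in>(Basis::'d set). (\<integral>\<^sup>+f. ennreal ((f b)^4) \<partial>(PN :: ('d \<Rightarrow> real) measure)))"
    by (subst nn_integral_cmult, measurable, subst nn_integral_sum, auto)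
  also have "\<dots> = ennreal (real DIM('d)) * (\<Sum>b\<in>(Basis::'d set). 3)"
    by (rule arg_cong2[where f="(*)"], simp, rule sum.cong) (auto simp: comp_nn[of _ "\<lambda>x. ennreal (x^4)"] NN_mom4)
  also have "\<dots> = ennreal (3 * (real DIM('d))^2)"
  proof -
    have "ennreal (3 * (real DIM('d))^2) = 3 * (ennreal (real DIM('d)))^2"
      by (simp add: ennreal_mult ennreal_power)
    then show ?thesis by (simp add: ennreal_of_nat_eq_real_of_nat power2_eq_square mult_ac)
  qed
  finally show ?thesis .
qed


lemma poly4:
  fixes a p c :: real
  assumes "0 \<le> a" "0 \<le> c" "p^2 \<le> a * c" "2 * p \<le> a + c"
  shows "(a + 2*p + c)^2 \<le> a^2 + 4*a*p + 8*a*c + 3*c^2"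
proof -
  have "(a + 2*p + c)^2 = a^2 + 4*p^2 + c^2 + 4*a*p + 2*a*c + 4*p*c"
    by (simp add: power2_eq_square algebra_simps)
  also have "\<dots> \<le> a^2 + 4*(a*c) + c^2 + 4*a*p + 2*a*c + 4*p*c" using assms(3) by simp
  also have "4*p*c \<le> 2*c*(a+c)" using mult_right_mono[OF assms(4) assms(2)] by (simp add: algebra_simps)
  then have "a^2 + 4*(a*c) + c^2 + 4*a*p + 2*a*c + 4*p*c \<le> a^2 + 4*a*p + 8*a*c + 3*c^2"
    by (simp add: algebra_simps power2_eq_square)
  finally show ?thesis .
qed

lemma vec4:
  fixes y v :: "'d::real_inner"
  shows "(norm (y + v))^4 \<le> (norm y)^4 + 4 * (norm y)^2 * inner y v + 8 * (norm y)^2 * (norm v)^2 + 3 * (norm v)^4"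
proof -
  let ?a = "(norm y)^2" and ?c = "(norm v)^2" and ?p = "inner y v"
  have e1: "(norm (y + v))^2 = ?a + 2 * ?p + ?c"
    by (simp add: power2_norm_eq_inner inner_add_left inner_add_right inner_commute)
  have e2: "(norm (y - v))^2 = ?a - 2 * ?p + ?c"
    by (simp add: power2_norm_eq_inner inner_diff_left inner_diff_right inner_commute)
  have "0 \<le> (norm (y - v))^2" by simp
  then have h4: "2 * ?p \<le> ?a + ?c" using e2 by simp
  have "\<bar>?p\<bar> \<le> norm y * norm v" by (rule Cauchy_Schwarz_ineq2)
  then have "?p^2 \<le> (norm y * norm v)^2"
    by (metis abs_ge_zero abs_le_square_iff abs_mult abs_norm_cancel power2_abs)
  then have h3: "?p^2 \<le> ?a * ?c" by (simp add: power_mult_distrib)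
  have "(norm (y + v))^4 = ((norm (y + v))^2)^2" by simp
  also have "\<dots> = (?a + 2 * ?p + ?c)^2" by (simp add: e1)
  also have "\<dots> \<le> ?a^2 + 4*?a*?p + 8*?a*?c + 3*?c^2" by (rule poly4) (use h3 h4 in auto)
  finally show ?thesis by simp
qed

lemma integrable_pow:
  fixes B :: "'u \<Rightarrow> 'd::euclidean_space"
  assumes P: "prob_space P" and Bm: "B \<in> borel_measurable P"
    and B4: "(\<integral>\<^sup>+u. ennreal ((norm (B u))^k) \<partial>P) \<le> ennreal q"
  shows "integrable P (\<lambda>u. (norm (B u))^k)"
proof (rule integrableI_bounded)
  show "(\<lambda>u. (norm (B u))^k) \<in> borel_measurable P" using Bm by measurable
  have "(\<integral>\<^sup>+u. ennreal (norm ((norm (B u))^k)) \<partial>P) = (\<integral>\<^sup>+u. ennreal ((norm (B u))^k) \<partial>P)" by simp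
  also have "\<dots> < \<infinity>" using B4 by (simp add: le_less_trans)
  finally show "(\<integral>\<^sup>+u. ennreal (norm ((norm (B u))^k)) \<partial>P) < \<infinity>" .
qed

lemma integral_le_from_nn:
  fixes g :: "'u \<Rightarrow> real"
  assumes "integrable P g" "\<And>u. 0 \<le> g u" "(\<integral>\<^sup>+u. ennreal (g u) \<partial>P) \<le> ennreal q" "0 \<le> q"
  shows "(\<integral>u. g u \<partial>P) \<le> q"
proof -
  have "ennreal (\<integral>u. g u \<partial>P) = (\<integral>\<^sup>+u. ennreal (g u) \<partial>P)"
    by (rule nn_integral_eq_integral[symmetric]) (use assms in auto)
  then have "ennreal (\<integral>u. g u \<partial>P) \<le> ennreal q" using assms(3) by simp
  then show ?thesis by (simp add: ennreal_le_iff[OF assms(4)])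
qed

lemma moment_bounds:
  fixes B :: "'u \<Rightarrow> 'd::euclidean_space" and y :: 'd and t :: real
  assumes P: "prob_space P" and Bm: "B \<in> borel_measurable P" and Bi: "integrable P B"
    and B0: "(\<integral>u. B u \<partial>P) = 0"
    and B2: "(\<integral>\<^sup>+u. ennreal ((norm (B u))^2) \<partial>P) \<le> ennreal q2"
    and B4: "(\<integral>\<^sup>+u. ennreal ((norm (B u))^4) \<partial>P) \<le> ennreal q4"
    and q: "0 \<le> q2" "0 \<le> q4"
  shows "(\<integral>\<^sup>+u. ennreal ((norm (y + t *\<^sub>R B u))^2) \<partial>P) \<le> ennreal ((norm y)^2 + t^2 * q2)"
    and "(\<integral>\<^sup>+u. ennreal ((norm (y + t *\<^sub>R B u))^4) \<partial>P) \<le> ennreal ((norm y)^4 + 8 * t^2 * (norm y)^2 * q2 + 3 * t^4 * q4)"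
proof -
  interpret prob_space P by (rule P)
  have i2: "integrable P (\<lambda>u. (norm (B u))^2)" by (rule integrable_pow[OF P Bm B2])
  have i4: "integrable P (\<lambda>u. (norm (B u))^4)" by (rule integrable_pow[OF P Bm B4])
  have I2: "(\<integral>u. (norm (B u))^2 \<partial>P) \<le> q2" by (rule integral_le_from_nn[OF i2 _ B2 q(1)]) simp
  have I4: "(\<integral>u. (norm (B u))^4 \<partial>P) \<le> q4" by (rule integral_le_from_nn[OF i4 _ B4 q(2)]) simp
  have iy: "integrable P (\<lambda>u. inner y (B u))" by (rule integrable_inner_right[OF Bi])
  have iy0: "(\<integral>u. inner y (B u) \<partial>P) = 0" using integral_inner_right[OF Bi, of y] B0 by simp
  have e2: "(norm (y + t *\<^sub>R B u))^2 = (norm y)^2 + 2 * t * inner y (B u) + t^2 * (norm (B u))^2" for u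
  proof -
    have "(norm (y + t *\<^sub>R B u))^2 = (norm y)^2 + 2 * inner y (t *\<^sub>R B u) + (norm (t *\<^sub>R B u))^2"
      unfolding power2_norm_eq_inner by (simp add: inner_add_left inner_add_right inner_commute)
    also have "\<dots> = (norm y)^2 + 2 * t * inner y (B u) + t^2 * (norm (B u))^2"
      by (simp add: power_mult_distrib)
    finally show ?thesis .
  qed
  have int2: "integrable P (\<lambda>u. (norm y)^2 + 2 * t * inner y (B u) + t^2 * (norm (B u))^2)"
    using iy i2 by auto
  have "(\<integral>\<^sup>+u. ennreal ((norm (y + t *\<^sub>R B u))^2) \<partial>P)
      = (\<integral>\<^sup>+u. ennreal ((norm y)^2 + 2 * t * inner y (B u) + t^2 * (norm (B u))^2) \<partial>P)"
    by (simp add: e2)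
  also have "\<dots> = ennreal (\<integral>u. (norm y)^2 + 2 * t * inner y (B u) + t^2 * (norm (B u))^2 \<partial>P)"
    by (rule nn_integral_eq_integral[OF int2]) (simp add: e2[symmetric])
  also have "(\<integral>u. (norm y)^2 + 2 * t * inner y (B u) + t^2 * (norm (B u))^2 \<partial>P)
      = (norm y)^2 + 2 * t * (\<integral>u. inner y (B u) \<partial>P) + t^2 * (\<integral>u. (norm (B u))^2 \<partial>P)"
    using iy i2 by (simp add: prob_space)
  also have "\<dots> \<le> (norm y)^2 + t^2 * q2" using iy0 I2 by (simp add: mult_left_mono)
  finally show "(\<integral>\<^sup>+u. ennreal ((norm (y + t *\<^sub>R B u))^2) \<partial>P) \<le> ennreal ((norm y)^2 + t^2 * q2)"
    by (simp add: ennreal_leI)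
  let ?R = "\<lambda>u. (norm y)^4 + 4 * (norm y)^2 * t * inner y (B u) + 8 * (norm y)^2 * t^2 * (norm (B u))^2 + 3 * t^4 * (norm (B u))^4"
  have pw: "\<And>u. (norm (y + t *\<^sub>R B u))^4 \<le> ?R u"
  proof -
    fix u
    have "(norm (y + t *\<^sub>R B u))^4 \<le> (norm y)^4 + 4 * (norm y)^2 * inner y (t *\<^sub>R B u) + 8 * (norm y)^2 * (norm (t *\<^sub>R B u))^2 + 3 * (norm (t *\<^sub>R B u))^4"
      by (rule vec4)
    also have "\<dots> = ?R u" by (simp add: power_mult_distrib)
    finally show "(norm (y + t *\<^sub>R B u))^4 \<le> ?R u" .
  qed
  have intR: "integrable P ?R" using iy i2 i4 by auto
  have "(\<integral>\<^sup>+u. ennreal ((norm (y + t *\<^sub>R B u))^4) \<partial>P) \<le> (\<integral>\<^sup>+u. ennreal (?R u) \<partial>P)"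
    by (rule nn_integral_mono) (use pw in \<open>simp add: ennreal_leI\<close>)
  also have "\<dots> = ennreal (\<integral>u. ?R u \<partial>P)"
    by (rule nn_integral_eq_integral[OF intR]) (rule AE_I2, rule order_trans[OF _ pw], simp)
  also have "(\<integral>u. ?R u \<partial>P) = (norm y)^4 + 4 * (norm y)^2 * t * (\<integral>u. inner y (B u) \<partial>P)
        + 8 * (norm y)^2 * t^2 * (\<integral>u. (norm (B u))^2 \<partial>P) + 3 * t^4 * (\<integral>u. (norm (B u))^4 \<partial>P)"
    using iy i2 i4 by (simp add: prob_space)
  also have "\<dots> \<le> (norm y)^4 + 8 * t^2 * (norm y)^2 * q2 + 3 * t^4 * q4"
  proof -
    have "8 * (norm y)^2 * t^2 * (\<integral>u. (norm (B u))^2 \<partial>P) \<le> 8 * (norm y)^2 * t^2 * q2"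
      using I2 by (intro mult_left_mono) auto
    moreover have "3 * t^4 * (\<integral>u. (norm (B u))^4 \<partial>P) \<le> 3 * t^4 * q4"
      using I4 by (intro mult_left_mono) auto
    ultimately show ?thesis using iy0 by (simp add: mult_ac)
  qed
  finally show "(\<integral>\<^sup>+u. ennreal ((norm (y + t *\<^sub>R B u))^4) \<partial>P) \<le> ennreal ((norm y)^4 + 8 * t^2 * (norm y)^2 * q2 + 3 * t^4 * q4)"
    by (simp add: ennreal_leI)
qed


definition Sset :: "nat \<Rightarrow> src set" where
  "Sset n = insert SrcX0 (SrcZ ` {1..n} \<union> SrcU ` {..<n})"

lemma b_comp:
  assumes bm: "(\<lambda>(x, u). b x u) \<in> borel_measurable (borel \<Otimes>\<^sub>M borel)"
    and f: "f \<in> measurable N borel" and g: "g \<in> measurable N borel"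
  shows "(\<lambda>\<omega>. b (f \<omega>) (g \<omega>)) \<in> borel_measurable N"
  using measurable_compose[OF measurable_Pair[OF f g] bm] by simp

lemma b_fix:
  assumes bm: "(\<lambda>(x, u). b x u) \<in> borel_measurable (borel \<Otimes>\<^sub>M borel)"
  shows "b x \<in> borel_measurable borel"
  using measurable_compose[OF measurable_Pair1'[of x borel borel] bm] by simp

lemma chain_meas:
  fixes b :: "'d::euclidean_space \<Rightarrow> 'u::euclidean_space \<Rightarrow> 'd"
  assumes bm: "(\<lambda>(x, u). b x u) \<in> borel_measurable (borel \<Otimes>\<^sub>M borel)"
    and off: "off \<le> 1"
  shows "Sset (2*m) \<subseteq> A \<Longrightarrow> coarse_chain b \<beta> h X0 Z U off m \<in> measurable (Msig M X0 Z U A) borel"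
proof (induction m)
  case 0
  then show ?case by (auto simp: Sset_def intro: X0_Msig)
next
  case (Suc m)
  have sub: "Sset (2*m) \<subseteq> A" using Suc.prems by (auto simp: Sset_def)
  have X: "coarse_chain b \<beta> h X0 Z U off m \<in> measurable (Msig M X0 Z U A) borel"
    by (rule Suc.IH[OF sub])
  have Uj: "U (2*m + off) \<in> measurable (Msig M X0 Z U A) borel"
    by (rule U_Msig) (use Suc.prems off in \<open>auto simp: Sset_def\<close>)
  have Z1: "Z (2*m+1) \<in> measurable (Msig M X0 Z U A) borel"
    by (rule Z_Msig) (use Suc.prems in \<open>auto simp: Sset_def\<close>)
  have Z2: "Z (2*m+2) \<in> measurable (Msig M X0 Z U A) borel"
    by (rule Z_Msig) (use Suc.prems in \<open>auto simp: Sset_def\<close>)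
  have B: "(\<lambda>\<omega>. b (coarse_chain b \<beta> h X0 Z U off m \<omega>) (U (2*m + off) \<omega>)) \<in> borel_measurable (Msig M X0 Z U A)"
    by (rule b_comp[OF bm X Uj])
  show ?case
    unfolding coarse_chain.simps Let_def
    by (intro borel_measurable_add borel_measurable_scaleR X B Z1 Z2 borel_measurable_const)
qed

lemma step_bound:
  fixes V :: "'a \<Rightarrow> 'v::topological_space" and W :: "'a \<Rightarrow> 'w::topological_space"
  assumes P: "prob_space M" and ind: "inputs_indep M X0 Z U"
    and rv: "X0 \<in> borel_measurable M" "\<And>k. Z k \<in> borel_measurable M" "\<And>k. U k \<in> borel_measurable M"
    and iA: "i \<notin> A" "i \<noteq> SrcZ 0" "SrcZ 0 \<notin> A"
    and V: "V \<in> measurable (Msig M X0 Z U A) borel"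
    and Wi: "inpE M X0 Z U i = {W -` B \<inter> space M | B. B \<in> sets borel}"
    and W: "W \<in> borel_measurable M"
    and law: "distr M borel W = Q"
    and g: "g \<in> borel_measurable (borel \<Otimes>\<^sub>M borel)"
    and G: "G \<in> borel_measurable borel"
    and bd: "\<And>v. (\<integral>\<^sup>+w. g (v, w) \<partial>Q) \<le> G v"
  shows "(\<integral>\<^sup>+\<omega>. g (V \<omega>, W \<omega>) \<partial>M) \<le> (\<integral>\<^sup>+\<omega>. G (V \<omega>) \<partial>M)"
proof -
  have VM: "V \<in> borel_measurable M" by (rule Msig_meas_M[OF rv V])
  have "(\<integral>\<^sup>+\<omega>. g (V \<omega>, W \<omega>) \<partial>M) = (\<integral>\<^sup>+v. (\<integral>\<^sup>+w. g (v,w) \<partial>Q) \<partial>distr M borel V)"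
    using indep_step[OF P ind rv iA V Wi W g] law by simp
  also have "\<dots> \<le> (\<integral>\<^sup>+v. G v \<partial>distr M borel V)"
    by (rule nn_integral_mono) (rule bd)
  also have "\<dots> = (\<integral>\<^sup>+\<omega>. G (V \<omega>) \<partial>M)"
  proof -
    have "G \<in> borel_measurable (distr M borel V)" using G by (metis measurable_cong_sets sets_distr)
    then show ?thesis by (rule nn_integral_distr[OF VM])
  qed
  finally show ?thesis .
qed

lemma inpE_U: "inpE M X0 Z U (SrcU k) = {U k -` B \<inter> space M | B. B \<in> sets borel}"
  by (simp add: inpE_def)
lemma inpE_Z: "inpE M X0 Z U (SrcZ k) = {Z k -` B \<inter> space M | B. B \<in> sets borel}"
  by (simp add: inpE_def)

lemma comb_aux:
  fixes f4 f2 :: "'u \<Rightarrow> real"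
  assumes  nn: "\<And>u. 0 \<le> f4 u" "\<And>u. 0 \<le> f2 u" and k: "0 \<le> k" "0 \<le> k0"
  shows "(\<integral>\<^sup>+u. ennreal (f4 u + k * f2 u + k0) \<partial>P) = (\<integral>\<^sup>+u. ennreal (f4 u) + (ennreal k * ennreal (f2 u) + ennreal k0) \<partial>P)"
proof (rule nn_integral_cong)
  fix u
  have "ennreal (f4 u + k * f2 u + k0) = ennreal (f4 u) + ennreal (k * f2 u + k0)"
    unfolding add.assoc by (rule ennreal_plus) (use nn k in auto)
  also have "ennreal (k * f2 u + k0) = ennreal (k * f2 u) + ennreal k0"
    by (rule ennreal_plus) (use nn k in auto)
  also have "ennreal (k * f2 u) = ennreal k * ennreal (f2 u)"
    by (rule ennreal_mult) (use nn k in auto)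
  finally show "ennreal (f4 u + k * f2 u + k0) = ennreal (f4 u) + (ennreal k * ennreal (f2 u) + ennreal k0)" .
qed

lemma combine:
  fixes f4 f2 :: "'u \<Rightarrow> real"
  assumes P: "prob_space P" and m: "f4 \<in> borel_measurable P" "f2 \<in> borel_measurable P"
    and nn: "\<And>u. 0 \<le> f4 u" "\<And>u. 0 \<le> f2 u"
    and b4: "(\<integral>\<^sup>+u. ennreal (f4 u) \<partial>P) \<le> ennreal A4"
    and b2: "(\<integral>\<^sup>+u. ennreal (f2 u) \<partial>P) \<le> ennreal A2"
    and k: "0 \<le> k" "0 \<le> k0" "0 \<le> A4" "0 \<le> A2"
  shows "(\<integral>\<^sup>+u. ennreal (f4 u + k * f2 u + k0) \<partial>P) \<le> ennreal (A4 + k * A2 + k0)"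
proof -
  interpret prob_space P by (rule P)
  have m4: "(\<lambda>u. ennreal (f4 u)) \<in> borel_measurable P" using m(1) by (rule measurable_compose) simp
  have m2: "(\<lambda>u. ennreal (f2 u)) \<in> borel_measurable P" using m(2) by (rule measurable_compose) simp
  have m2': "(\<lambda>u. ennreal k * ennreal (f2 u)) \<in> borel_measurable P" using m2 by (rule borel_measurable_times_ennreal[OF borel_measurable_const])
  have "(\<integral>\<^sup>+u. ennreal (f4 u + k * f2 u + k0) \<partial>P) = (\<integral>\<^sup>+u. ennreal (f4 u) + (ennreal k * ennreal (f2 u) + ennreal k0) \<partial>P)"
    by (rule comb_aux[OF nn k(1,2)])
  also have "\<dots> = (\<integral>\<^sup>+u. ennreal (f4 u) \<partial>P) + (\<integral>\<^sup>+u. (ennreal k * ennreal (f2 u) + ennreal k0) \<partial>P)"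
    by (rule nn_integral_add[OF m4]) (rule borel_measurable_add[OF m2' borel_measurable_const])
  also have "(\<integral>\<^sup>+u. (ennreal k * ennreal (f2 u) + ennreal k0) \<partial>P) = (\<integral>\<^sup>+u. ennreal k * ennreal (f2 u) \<partial>P) + (\<integral>\<^sup>+u. ennreal k0 \<partial>P)"
    by (rule nn_integral_add[OF m2' borel_measurable_const])
  also have "(\<integral>\<^sup>+u. ennreal k * ennreal (f2 u) \<partial>P) = ennreal k * (\<integral>\<^sup>+u. ennreal (f2 u) \<partial>P)"
    by (rule nn_integral_cmult[OF m2])
  also have "(\<integral>\<^sup>+u. ennreal k0 \<partial>P) = ennreal k0" by (simp add: emeasure_space_1)
  also have "(\<integral>\<^sup>+u. ennreal (f4 u) \<partial>P) + (ennreal k * (\<integral>\<^sup>+u. ennreal (f2 u) \<partial>P) + ennreal k0)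
      \<le> ennreal A4 + (ennreal k * ennreal A2 + ennreal k0)"
    by (intro add_mono mult_left_mono b4 b2 order_refl) auto
  also have "\<dots> = ennreal (A4 + k * A2 + k0)"
  proof -
    have "ennreal (A4 + k * A2 + k0) = ennreal A4 + ennreal (k * A2 + k0)"
      unfolding add.assoc by (rule ennreal_plus) (use k in auto)
    also have "ennreal (k * A2 + k0) = ennreal (k * A2) + ennreal k0"
      by (rule ennreal_plus) (use k in auto)
    also have "ennreal (k * A2) = ennreal k * ennreal A2"
      by (rule ennreal_mult) (use k in auto)
    finally show ?thesis by simp
  qed
  finally show ?thesis .
qed


lemma amgm: "0 < K \<Longrightarrow> P * r \<le> K/2 * r^2 + P^2/(2*K)" for K P r :: real
proof -
  assume K: "0 < K"
  have "K/2*r^2 + P^2/(2*K) - P*r = (K*r - P)^2/(2*K)"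
    using K by (simp add: field_simps power2_eq_square)
  moreover have "0 \<le> (K*r - P)^2/(2*K)" using K by simp
  ultimately show ?thesis by linarith
qed

lemma S2l:
  fixes u r h G Asq :: real
  assumes u: "0 \<le> u" "u \<le> 1" and r: "0 \<le> r" and h: "0 \<le> h" "h \<le> 1" and G: "0 \<le> G"
    and A: "0 \<le> Asq" "Asq \<le> u*r + h*G"
  shows "Asq^2 \<le> u*r^2 + h*(2*G*r + G^2)"
proof -
  have "Asq^2 \<le> (u*r + h*G)^2" using A by (intro power_mono) auto
  also have "\<dots> = u^2*r^2 + 2*u*r*h*G + h^2*G^2" by (simp add: power2_eq_square algebra_simps)
  also have "\<dots> \<le> u*r^2 + h*(2*G*r + G^2)"
  proof -
    have a: "u^2*r^2 \<le> u*r^2"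
    proof -
      have "u*u \<le> u*1" using u by (intro mult_left_mono) auto
      then show ?thesis using r by (simp add: power2_eq_square mult_right_mono)
    qed
    have b: "u*(2*r*h*G) \<le> 1*(2*r*h*G)" using u r h G by (intro mult_right_mono) auto
    have c: "h*(h*G^2) \<le> 1*(h*G^2)" using h G by (intro mult_right_mono) auto
    from a b c show ?thesis by (simp add: power2_eq_square algebra_simps)
  qed
  finally show ?thesis .
qed

lemma S3l:
  fixes Asq r G h q2 kp :: real
  assumes "0 \<le> Asq" "Asq \<le> r + G" "0 \<le> r" "0 \<le> q2" "q2 \<le> kp"
  shows "8*(2*h)^2*Asq*(q2*(1+r)) \<le> h*(32*h*kp*((r+G)*(1+r)))"
proof -
  have "Asq*(q2*(1+r)) \<le> (r+G)*(kp*(1+r))"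
    using assms by (intro mult_mono mult_right_mono) auto
  then have "(32*h^2)*(Asq*(q2*(1+r))) \<le> (32*h^2)*((r+G)*(kp*(1+r)))" by (intro mult_left_mono) auto
  then show ?thesis by (simp add: power2_eq_square algebra_simps)
qed

lemma S4l:
  fixes r h q4 kp :: real
  assumes "0 \<le> h" "h \<le> 1" "0 \<le> q4" "q4 \<le> kp"
  shows "3*(2*h)^4*(q4*(1+r^2)) \<le> h*(48*h*kp*(1+r^2))"
proof -
  have h4: "h^4 \<le> h^2" using assms by (simp add: power_decreasing)
  have "h^4*(q4*(1+r^2)) \<le> h^2*(kp*(1+r^2))"
    using assms h4 by (intro mult_mono mult_right_mono) auto
  then have "48*(h^4*(q4*(1+r^2))) \<le> 48*(h^2*(kp*(1+r^2)))" by simp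
  then show ?thesis by (simp add: power2_eq_square algebra_simps)
qed

lemma S5l:
  fixes Asq r G h q2 kp c2 n bb :: real
  assumes "0 \<le> h" "h \<le> 1" "Asq \<le> r + G" "0 \<le> r" "0 \<le> q2" "q2 \<le> kp" "c2 = bb*h" "0 \<le> bb" "0 \<le> n"
  shows "(16*c2*n)*(Asq + (2*h)^2*(q2*(1+r))) \<le> h*(16*bb*n*(r+G+4*kp*(1+r)))"
proof -
  have hh: "h^2 \<le> 1" using assms by (simp add: power_le_one)
  have X: "h^2*(q2*(1+r)) \<le> 1*(kp*(1+r))" using assms hh by (intro mult_mono mult_right_mono) auto
  have Y: "(2*h)^2*(q2*(1+r)) = 4*(h^2*(q2*(1+r)))" by (simp add: power2_eq_square)
  have "Asq + (2*h)^2*(q2*(1+r)) \<le> r+G+4*kp*(1+r)" using X Y assms(3) by linarith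
  then have "(16*bb*n*h)*(Asq + (2*h)^2*(q2*(1+r))) \<le> (16*bb*n*h)*(r+G+4*kp*(1+r))"
    using assms by (intro mult_left_mono) auto
  then show ?thesis using assms by (simp add: algebra_simps)
qed

lemma S6l:
  fixes h c2 n bb :: real
  assumes "0 \<le> h" "h \<le> 1" "c2 = bb*h"
  shows "26*c2^2*n^2 \<le> h*(26*bb^2*n^2)"
proof -
  have "h^2 \<le> h" using assms by (simp add: power2_eq_square mult_left_le_one_le)
  then have "(26*bb^2*n^2)*h^2 \<le> (26*bb^2*n^2)*h" by (intro mult_left_mono) auto
  then show ?thesis using assms by (simp add: power_mult_distrib algebra_simps)
qed

lemma S7l:
  fixes r G h kp bb n K :: real
  assumes "0 \<le> h" "h \<le> 1" "160*h*kp \<le> K" "0 \<le> r" "0 \<le> kp" "0 \<le> G"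
  shows "2*G*r + G^2 + 32*h*kp*((r+G)*(1+r)) + 48*h*kp*(1+r^2) + 16*bb*n*(r+G+4*kp*(1+r)) + 26*bb^2*n^2
      \<le> K/2*r^2 + (2*G + 32*kp*(1+G) + 16*bb*n*(1+4*kp))*r + (G^2 + 32*kp*G + 48*kp + 16*bb*n*(G+4*kp) + 26*bb^2*n^2)"
proof -
  have e: "32*h*kp*((r+G)*(1+r)) + 48*h*kp*(1+r^2) = (80*h*kp)*r^2 + (h*(32*kp*(1+G)))*r + h*(kp*(32*G+48))"
    by (simp add: power2_eq_square algebra_simps)
  have a1: "(80*h*kp)*r^2 \<le> K/2*r^2" using assms by (intro mult_right_mono) auto
  have a2: "(h*(32*kp*(1+G)))*r \<le> (32*kp*(1+G))*r"
  proof -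
    have "(h*(32*kp*(1+G)))*r \<le> (1*(32*kp*(1+G)))*r" using assms by (intro mult_right_mono) auto
    then show ?thesis by simp
  qed
  have a3: "h*(kp*(32*G+48)) \<le> kp*(32*G+48)"
  proof -
    have "h*(kp*(32*G+48)) \<le> 1*(kp*(32*G+48))" using assms by (intro mult_right_mono) auto
    then show ?thesis by simp
  qed
  have r1: "K/2*r^2 + (2*G + 32*kp*(1+G) + 16*bb*n*(1+4*kp))*r + (G^2 + 32*kp*G + 48*kp + 16*bb*n*(G+4*kp) + 26*bb^2*n^2)
      = K/2*r^2 + 2*G*r + G^2 + (32*kp*(1+G))*r + kp*(32*G+48) + 16*bb*n*(r+G+4*kp*(1+r)) + 26*bb^2*n^2"
    by (simp add: algebra_simps)
  show ?thesis unfolding r1 using e a1 a2 a3 by linarith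
qed

lemma mom_poly:
  fixes r Asq h K G kp q2 q4 c2 n bb :: real
  assumes r: "0 \<le> r" and Asq: "0 \<le> Asq" and AsqB: "Asq \<le> (1-2*h*K)*r + h*G"
    and h: "0 < h" "h \<le> 1" "2*h*K \<le> 1" "160*h*kp \<le> K" and K: "0 < K" and G: "0 \<le> G" and kp: "0 \<le> kp"
    and q2: "0 \<le> q2" "q2 \<le> kp" and q4: "0 \<le> q4" "q4 \<le> kp" and n: "0 \<le> n"
    and c2: "c2 = bb*h" and bb: "0 \<le> bb"
  shows "Asq^2 + 8*(2*h)^2*Asq*(q2*(1+r)) + 3*(2*h)^4*(q4*(1+r^2)) + (16*c2*n)*(Asq + (2*h)^2*(q2*(1+r))) + 26*c2^2*n^2
     \<le> (1-h*K)*r^2 + h*((G^2 + 32*kp*G + 48*kp + 16*bb*n*(G+4*kp) + 26*bb^2*n^2)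
                       + (2*G + 32*kp*(1+G) + 16*bb*n*(1+4*kp))^2/(2*K))"
proof -
  define u where "u = 1-2*h*K"
  have u: "0 \<le> u" "u \<le> 1" using h K by (auto simp: u_def)
  have S1: "Asq \<le> r + G"
  proof -
    have "u*r \<le> 1*r" using u r by (intro mult_right_mono) auto
    moreover have "h*G \<le> 1*G" using h G by (intro mult_right_mono) auto
    ultimately show ?thesis using AsqB u_def by simp
  qed
  have S2: "Asq^2 \<le> u*r^2 + h*(2*G*r + G^2)"
    by (rule S2l) (use u r h G Asq AsqB u_def in auto)
  have S3: "8*(2*h)^2*Asq*(q2*(1+r)) \<le> h*(32*h*kp*((r+G)*(1+r)))" by (rule S3l) (use Asq S1 r q2 in auto)
  have S4: "3*(2*h)^4*(q4*(1+r^2)) \<le> h*(48*h*kp*(1+r^2))" by (rule S4l) (use h q4 in auto)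
  have S5: "(16*c2*n)*(Asq + (2*h)^2*(q2*(1+r))) \<le> h*(16*bb*n*(r+G+4*kp*(1+r)))"
    by (rule S5l) (use h S1 r q2 c2 bb n in auto)
  have S6: "26*c2^2*n^2 \<le> h*(26*bb^2*n^2)" by (rule S6l) (use h c2 in auto)
  define P1 where "P1 = 2*G + 32*kp*(1+G) + 16*bb*n*(1+4*kp)"
  define P0 where "P0 = G^2 + 32*kp*G + 48*kp + 16*bb*n*(G+4*kp) + 26*bb^2*n^2"
  have S7: "2*G*r + G^2 + 32*h*kp*((r+G)*(1+r)) + 48*h*kp*(1+r^2) + 16*bb*n*(r+G+4*kp*(1+r)) + 26*bb^2*n^2
      \<le> K/2*r^2 + P1*r + P0"
    unfolding P1_def P0_def by (rule S7l) (use h r kp G in auto)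
  have S8: "P1*r \<le> K/2*r^2 + P1^2/(2*K)" by (rule amgm[OF K])
  have "Asq^2 + 8*(2*h)^2*Asq*(q2*(1+r)) + 3*(2*h)^4*(q4*(1+r^2)) + (16*c2*n)*(Asq + (2*h)^2*(q2*(1+r))) + 26*c2^2*n^2
     \<le> u*r^2 + h*(2*G*r + G^2) + h*(32*h*kp*((r+G)*(1+r))) + h*(48*h*kp*(1+r^2)) + h*(16*bb*n*(r+G+4*kp*(1+r))) + h*(26*bb^2*n^2)"
    using S2 S3 S4 S5 S6 by linarith
  also have "\<dots> = u*r^2 + h*(2*G*r + G^2 + 32*h*kp*((r+G)*(1+r)) + 48*h*kp*(1+r^2) + 16*bb*n*(r+G+4*kp*(1+r)) + 26*bb^2*n^2)"
    by (simp add: distrib_left)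
  also have "\<dots> \<le> u*r^2 + h*(K*r^2 + P0 + P1^2/(2*K))"
  proof -
    have "2*G*r + G^2 + 32*h*kp*((r+G)*(1+r)) + 48*h*kp*(1+r^2) + 16*bb*n*(r+G+4*kp*(1+r)) + 26*bb^2*n^2
       \<le> K*r^2 + P0 + P1^2/(2*K)" using S7 S8 by linarith
    then show ?thesis using h by (intro add_left_mono mult_left_mono) auto
  qed
  also have "\<dots> = (1-h*K)*r^2 + h*(P0 + P1^2/(2*K))" by (simp add: u_def algebra_simps)
  finally show ?thesis unfolding P0_def P1_def .
qed

lemma sq3: "(a+b+c)^2 \<le> 3*(a^2+b^2+c^2)" for a b c :: real
proof -
  have "0 \<le> (a-b)^2 + (b-c)^2 + (a-c)^2" by simp
  then show ?thesis by (simp add: power2_eq_square algebra_simps)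
qed

lemma prod_le: "(1+x)*(1+y) \<le> (2+x+y)^2/4" for x y :: real
proof -
  have "0 \<le> (x-y)^2" by simp
  then show ?thesis by (simp add: power2_eq_square field_simps)
qed

lemma d_poly:
  fixes p Asq h K P2 Q2 kp e q2 q4 :: real
  assumes p: "0 \<le> p" and A: "0 \<le> Asq" "Asq \<le> (1-2*h*K)*p"
    and h: "0 < h" "h \<le> 1" "2*h*K \<le> 1" and K: "0 < K" and PQ: "0 \<le> P2" "0 \<le> Q2"
    and kp: "0 \<le> kp" and e: "0 \<le> e" and q2: "0 \<le> q2" "q2 \<le> kp*e/2" and q4: "0 \<le> q4" "q4 \<le> kp*e^2/4"
  shows "(Asq^2 + 8*(-(2*h))^2*Asq*(q2*(1+Q2)) + 3*(-(2*h))^4*(q4*(1+Q2^2)))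
          + (8*(2*h)^2*(q2*(1+P2)))*(Asq + (-(2*h))^2*(q2*(1+Q2))) + 3*(2*h)^4*(q4*(1+P2^2))
       \<le> (1-h*K)*p^2 + h^3*e^2*((384*kp^2/K + 48*kp^2 + 12*kp)*(2+P2^2+Q2^2))"
proof -
  define u where "u = 1-2*h*K"
  define W where "W = 2+P2+Q2"
  define X where "X = P2^2+Q2^2"
  have u: "0 \<le> u" "u \<le> 1" using h K by (auto simp: u_def)
  have W: "0 \<le> W" using PQ by (simp add: W_def)
  have X: "0 \<le> X" by (simp add: X_def)
  have Ap: "Asq \<le> p"
  proof -
    have "u*p \<le> 1*p" using u p by (intro mult_right_mono) auto
    then show ?thesis using A u_def by simp
  qed
  have D1: "Asq^2 \<le> u*p^2"
  proof -
    have "Asq^2 \<le> (u*p)^2" using A u_def by (intro power_mono) auto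
    also have "\<dots> = (u*u)*p^2" by (simp add: power2_eq_square)
    also have "\<dots> \<le> (u*1)*p^2" using u by (intro mult_right_mono mult_left_mono) auto
    finally show ?thesis by simp
  qed
  have D2: "8*(-(2*h))^2*Asq*(q2*(1+Q2)) + (8*(2*h)^2*(q2*(1+P2)))*Asq \<le> (16*h^2*kp*e*W)*p"
  proof -
    have "8*(-(2*h))^2*Asq*(q2*(1+Q2)) + (8*(2*h)^2*(q2*(1+P2)))*Asq = (32*h^2*W)*(q2*Asq)"
      by (simp add: W_def power2_eq_square algebra_simps)
    also have "\<dots> \<le> (32*h^2*W)*((kp*e/2)*p)"
      using W q2 A Ap by (intro mult_left_mono mult_mono) auto
    also have "\<dots> = (16*h^2*kp*e*W)*p" by (simp add: algebra_simps)
    finally show ?thesis .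
  qed
  have D3: "(16*h^2*kp*e*W)*p \<le> h*K*p^2 + 64*h^3*kp^2*e^2*W^2/K"
  proof -
    have "(16*h^2*kp*e*W)*p \<le> (2*h*K)/2*p^2 + (16*h^2*kp*e*W)^2/(2*(2*h*K))"
      by (rule amgm) (use h K in simp)
    also have "(16*h^2*kp*e*W)^2/(2*(2*h*K)) = 64*h^3*kp^2*e^2*W^2/K"
      using h K by (simp add: power2_eq_square field_simps power3_eq_cube)
    finally show ?thesis by simp
  qed
  have D4: "W^2 \<le> 3*(4+X)"
    using sq3[of 2 P2 Q2] by (simp add: W_def X_def)
  have D5: "(8*(2*h)^2*(q2*(1+P2)))*((-(2*h))^2*(q2*(1+Q2))) \<le> 8*h^4*kp^2*e^2*W^2"
  proof -
    have "(8*(2*h)^2*(q2*(1+P2)))*((-(2*h))^2*(q2*(1+Q2))) = (128*h^4)*(q2^2*((1+P2)*(1+Q2)))"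
      by (simp add: power2_eq_square power4_eq_xxxx algebra_simps)
    also have "\<dots> \<le> (128*h^4)*((kp*e/2)^2*(W^2/4))"
      using q2 PQ prod_le[of P2 Q2] by (intro mult_left_mono mult_mono power_mono) (auto simp: W_def)
    also have "\<dots> = 8*h^4*kp^2*e^2*W^2" by (simp add: power2_eq_square)
    finally show ?thesis .
  qed
  have D6: "3*(-(2*h))^4*(q4*(1+Q2^2)) + 3*(2*h)^4*(q4*(1+P2^2)) \<le> 12*h^4*kp*e^2*(2+X)"
  proof -
    have "3*(-(2*h))^4*(q4*(1+Q2^2)) + 3*(2*h)^4*(q4*(1+P2^2)) = (48*h^4)*(q4*(2+X))"
      by (simp add: X_def power_mult_distrib algebra_simps)
    also have "\<dots> \<le> (48*h^4)*((kp*e^2/4)*(2+X))" using q4 X by (intro mult_left_mono mult_right_mono) auto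
    also have "\<dots> = 12*h^4*kp*e^2*(2+X)" by simp
    finally show ?thesis .
  qed
  have h3: "h^4 \<le> h^3" using h by (simp add: power_decreasing)
  have E1: "64*h^3*kp^2*e^2*W^2/K \<le> h^3*e^2*((192*kp^2/K)*(4+X))"
  proof -
    have "(h^3*e^2*(64*kp^2/K))*W^2 \<le> (h^3*e^2*(64*kp^2/K))*(3*(4+X))"
      using D4 h kp K by (intro mult_left_mono) auto
    then show ?thesis by (simp add: algebra_simps)
  qed
  have E2: "8*h^4*kp^2*e^2*W^2 \<le> h^3*e^2*((24*kp^2)*(4+X))"
  proof -
    have "(h^4*(8*kp^2*e^2))*W^2 \<le> (h^3*(8*kp^2*e^2))*(3*(4+X))"
      using D4 h3 h W by (intro mult_mono) auto
    then show ?thesis by (simp add: algebra_simps)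
  qed
  have E3: "12*h^4*kp*e^2*(2+X) \<le> h^3*e^2*(12*kp*(2+X))"
  proof -
    have "h^4*(12*kp*e^2*(2+X)) \<le> h^3*(12*kp*e^2*(2+X))" using h3 kp X by (intro mult_right_mono) auto
    then show ?thesis by (simp add: algebra_simps)
  qed
  have E4: "h^3*e^2*((192*kp^2/K)*(4+X)) + h^3*e^2*((24*kp^2)*(4+X)) + h^3*e^2*(12*kp*(2+X))
     \<le> h^3*e^2*((384*kp^2/K + 48*kp^2 + 12*kp)*(2+X))"
  proof -
    have "(192*kp^2/K)*(4+X) \<le> (384*kp^2/K)*(2+X)"
    proof -
      have "(192*kp^2/K)*(4+X) \<le> (192*kp^2/K)*(2*(2+X))" using X kp K by (intro mult_left_mono) auto
      also have "\<dots> = (384*kp^2/K)*(2+X)" by simp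
      finally show ?thesis .
    qed
    moreover have "(24*kp^2)*(4+X) \<le> (48*kp^2)*(2+X)"
    proof -
      have "(24*kp^2)*(4+X) \<le> (24*kp^2)*(2*(2+X))" using X by (intro mult_left_mono) auto
      also have "\<dots> = (48*kp^2)*(2+X)" by simp
      finally show ?thesis .
    qed
    ultimately have "(192*kp^2/K)*(4+X) + (24*kp^2)*(4+X) + 12*kp*(2+X) \<le> (384*kp^2/K + 48*kp^2 + 12*kp)*(2+X)"
      by (simp add: algebra_simps)
    then have "(h^3*e^2)*((192*kp^2/K)*(4+X) + (24*kp^2)*(4+X) + 12*kp*(2+X)) \<le> (h^3*e^2)*((384*kp^2/K + 48*kp^2 + 12*kp)*(2+X))"
      using h by (intro mult_left_mono) auto
    then show ?thesis by (simp add: algebra_simps)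
  qed
  have lhs: "(Asq^2 + 8*(-(2*h))^2*Asq*(q2*(1+Q2)) + 3*(-(2*h))^4*(q4*(1+Q2^2)))
          + (8*(2*h)^2*(q2*(1+P2)))*(Asq + (-(2*h))^2*(q2*(1+Q2))) + 3*(2*h)^4*(q4*(1+P2^2))
     = Asq^2 + (8*(-(2*h))^2*Asq*(q2*(1+Q2)) + (8*(2*h)^2*(q2*(1+P2)))*Asq)
       + (8*(2*h)^2*(q2*(1+P2)))*((-(2*h))^2*(q2*(1+Q2)))
       + (3*(-(2*h))^4*(q4*(1+Q2^2)) + 3*(2*h)^4*(q4*(1+P2^2)))"
    by (simp add: algebra_simps)
  have fin: "u*p^2 + h*K*p^2 = (1-h*K)*p^2" by (simp add: u_def algebra_simps)
  have xx: "2+P2^2+Q2^2 = 2+X" unfolding X_def by simp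
  show ?thesis unfolding lhs xx
    using D1 D2 D3 D5 D6 E1 E2 E3 E4 fin by linarith
qed


lemma bm_fst_snd:
  assumes "(\<lambda>(x, u). b x u) \<in> borel_measurable (borel \<Otimes>\<^sub>M borel)"
  shows "(\<lambda>p. b (fst p) (snd p)) \<in> borel_measurable (borel \<Otimes>\<^sub>M borel)"
  using assms by (simp add: case_prod_beta')

lemma std_meas: "f \<in> measurable borel N \<Longrightarrow> f \<in> measurable (std_normal_vec :: 'd::euclidean_space measure) N"
proof -
  have "sets (std_normal_vec :: 'd measure) = sets borel" unfolding std_normal_vec_def by simp
  then have "measurable (std_normal_vec :: 'd measure) N = measurable borel N" by (rule measurable_cong_sets) simp
  then show "f \<in> measurable borel N \<Longrightarrow> f \<in> measurable (std_normal_vec :: 'd::euclidean_space measure) N" by simp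
qed

lemma Q_meas: "sets Q = sets borel \<Longrightarrow> f \<in> measurable borel N \<Longrightarrow> f \<in> measurable Q N"
proof -
  assume "sets Q = sets borel" "f \<in> measurable borel N"
  moreover from this(1) have "measurable Q N = measurable borel N" by (rule measurable_cong_sets) simp
  ultimately show ?thesis by simp
qed

lemma mom_step:
  fixes a :: "'d::euclidean_space \<Rightarrow> 'd" and b :: "'d \<Rightarrow> 'u::euclidean_space \<Rightarrow> 'd"
    and M :: "'a measure" and X0 :: "'a \<Rightarrow> 'd" and Z :: "nat \<Rightarrow> 'a \<Rightarrow> 'd" and U :: "nat \<Rightarrow> 'a \<Rightarrow> 'u"
    and Q :: "'u measure"
  assumes P: "prob_space M" and ind: "inputs_indep M X0 Z U"
    and rv: "X0 \<in> borel_measurable M" "\<And>k. Z k \<in> borel_measurable M" "\<And>k. U k \<in> borel_measurable M"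
    and bm: "(\<lambda>(x, u). b x u) \<in> borel_measurable (borel \<Otimes>\<^sub>M borel)"
    and am: "a \<in> borel_measurable borel"
    and off: "off \<le> 1"
    and Ulaw: "\<And>j. distr M borel (U j) = Q"
    and Zlaw: "\<And>k. k \<ge> 1 \<Longrightarrow> distr M borel (Z k) = std_normal_vec"
    and N2: "\<And>x y t. (\<integral>\<^sup>+u. ennreal ((norm (y + t *\<^sub>R (b x u - a x)))^2) \<partial>Q) \<le> ennreal ((norm y)^2 + t^2 * (q2 * (1 + (norm x)^2)))"
    and N4: "\<And>x y t. (\<integral>\<^sup>+u. ennreal ((norm (y + t *\<^sub>R (b x u - a x)))^4) \<partial>Q)
               \<le> ennreal ((norm y)^4 + 8 * t^2 * (norm y)^2 * (q2 * (1 + (norm x)^2)) + 3 * t^4 * (q4 * (1 + (norm x)^4)))"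
    and G2: "\<And>y t. (\<integral>\<^sup>+z. ennreal ((norm (y + t *\<^sub>R z))^2) \<partial>(std_normal_vec :: 'd measure)) \<le> ennreal ((norm y)^2 + t^2 * n)"
    and G4: "\<And>y t. (\<integral>\<^sup>+z. ennreal ((norm (y + t *\<^sub>R z))^4) \<partial>(std_normal_vec :: 'd measure)) \<le> ennreal ((norm y)^4 + 8 * t^2 * (norm y)^2 * n + 3 * t^4 * (3 * n^2))"
    and Qp: "prob_space Q" and Qs: "sets Q = sets borel"
    and nn: "0 \<le> q2" "0 \<le> q4" "0 \<le> n"
  shows "(\<integral>\<^sup>+\<omega>. ennreal ((norm (coarse_chain b \<beta> h X0 Z U off (Suc m) \<omega>))^4) \<partial>M)
       \<le> (\<integral>\<^sup>+\<omega>. ennreal (let x = coarse_chain b \<beta> h X0 Z U off m \<omega>; A = x + (2*h) *\<^sub>R a x; c = \<beta> * sqrt h in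
              ((norm A)^4 + 8 * (2*h)^2 * (norm A)^2 * (q2 * (1 + (norm x)^2)) + 3 * (2*h)^4 * (q4 * (1 + (norm x)^4)))
            + (16 * c^2 * n) * ((norm A)^2 + (2*h)^2 * (q2 * (1 + (norm x)^2))) + 26 * c^4 * n^2) \<partial>M)"
proof -
  define Xm where "Xm = coarse_chain b \<beta> h X0 Z U off m"
  define j where "j = 2*m + off"
  define c where "c = \<beta> * sqrt h"
  define Y1 where "Y1 = (\<lambda>\<omega>. Xm \<omega> + (2*h) *\<^sub>R b (Xm \<omega>) (U j \<omega>))"
  define Y2 where "Y2 = (\<lambda>\<omega>. Y1 \<omega> + c *\<^sub>R Z (2*m+1) \<omega>)"
  define A0 where "A0 = Sset (2*m)"
  define A1 where "A1 = insert (SrcU j) A0"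
  define A2 where "A2 = insert (SrcZ (2*m+1)) A1"
  have bm': "(\<lambda>p. b (fst p) (snd p)) \<in> borel_measurable (borel \<Otimes>\<^sub>M borel)" by (rule bm_fst_snd[OF bm])
  have Xs: "coarse_chain b \<beta> h X0 Z U off (Suc m) \<omega> = Y2 \<omega> + c *\<^sub>R Z (2*m+2) \<omega>" for \<omega>
    by (simp add: Y2_def Y1_def Xm_def j_def c_def Let_def scaleR_add_right algebra_simps)
  have XmA: "Xm \<in> measurable (Msig M X0 Z U A) borel" if "A0 \<subseteq> A" for A
    unfolding Xm_def by (rule chain_meas[OF bm off]) (use that in \<open>simp add: A0_def\<close>)
  have Y1m: "Y1 \<in> measurable (Msig M X0 Z U A1) borel"
  proof -
    have "U j \<in> measurable (Msig M X0 Z U A1) borel" by (rule U_Msig) (simp add: A1_def)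
    moreover have "Xm \<in> measurable (Msig M X0 Z U A1) borel" by (rule XmA) (auto simp: A1_def)
    ultimately show ?thesis unfolding Y1_def
      by (intro borel_measurable_add borel_measurable_scaleR borel_measurable_const b_comp[OF bm])
  qed
  have Y2m: "Y2 \<in> measurable (Msig M X0 Z U A2) borel"
  proof -
    have "Z (2*m+1) \<in> measurable (Msig M X0 Z U A2) borel" by (rule Z_Msig) (simp add: A2_def)
    moreover have "Y1 \<in> measurable (Msig M X0 Z U A2) borel"
    proof -
      have "U j \<in> measurable (Msig M X0 Z U A2) borel" by (rule U_Msig) (simp add: A2_def A1_def)
      moreover have "Xm \<in> measurable (Msig M X0 Z U A2) borel" by (rule XmA) (auto simp: A2_def A1_def)
      ultimately show ?thesis unfolding Y1_def
        by (intro borel_measurable_add borel_measurable_scaleR borel_measurable_const b_comp[OF bm])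
    qed
    ultimately show ?thesis unfolding Y2_def
      by (intro borel_measurable_add borel_measurable_scaleR borel_measurable_const)
  qed
  have fresh: "SrcZ (2*m+2) \<notin> A2" "SrcZ (2*m+1) \<notin> A1" "SrcU j \<notin> A0"
    "SrcZ 0 \<notin> A0" "SrcZ 0 \<notin> A1" "SrcZ 0 \<notin> A2"
    by (auto simp: A2_def A1_def A0_def Sset_def j_def)
  note bm'[measurable] am[measurable]
  define G1 where "G1 = (\<lambda>v::'d. ennreal ((norm v)^4 + (8 * c^2 * n) * (norm v)^2 + 9 * c^4 * n^2))"
  have stepA: "(\<integral>\<^sup>+\<omega>. ennreal ((norm (coarse_chain b \<beta> h X0 Z U off (Suc m) \<omega>))^4) \<partial>M) \<le> (\<integral>\<^sup>+\<omega>. G1 (Y2 \<omega>) \<partial>M)"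
  proof -
    have "(\<integral>\<^sup>+\<omega>. ennreal ((norm (coarse_chain b \<beta> h X0 Z U off (Suc m) \<omega>))^4) \<partial>M)
        = (\<integral>\<^sup>+\<omega>. (\<lambda>p. ennreal ((norm (fst p + c *\<^sub>R snd p))^4)) (Y2 \<omega>, Z (2*m+2) \<omega>) \<partial>M)"
      unfolding Xs by simp
    also have "\<dots> \<le> (\<integral>\<^sup>+\<omega>. G1 (Y2 \<omega>) \<partial>M)"
    proof (rule step_bound[OF P ind rv fresh(1) _ fresh(6) Y2m inpE_Z rv(2) Zlaw])
      show "SrcZ (2*m+2) \<noteq> SrcZ 0" by simp
      show "1 \<le> 2*m+2" by simp
      show "(\<lambda>p. ennreal ((norm (fst p + c *\<^sub>R snd p))^4)) \<in> borel_measurable (borel \<Otimes>\<^sub>M (borel :: 'd measure))" by measurable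
      show "G1 \<in> borel_measurable borel" unfolding G1_def by measurable
      fix v :: 'd
      have "(\<integral>\<^sup>+z. ennreal ((norm (v + c *\<^sub>R z))^4) \<partial>std_normal_vec) \<le> ennreal ((norm v)^4 + 8 * c^2 * (norm v)^2 * n + 3 * c^4 * (3 * n^2))"
        by (rule G4)
      also have "\<dots> = G1 v" unfolding G1_def by (simp add: algebra_simps)
      finally show "(\<integral>\<^sup>+z. (\<lambda>p. ennreal ((norm (fst p + c *\<^sub>R snd p))^4)) (v, z) \<partial>std_normal_vec) \<le> G1 v" by simp
    qed
    finally show ?thesis .
  qed
  define G2f where "G2f = (\<lambda>v::'d. ennreal ((norm v)^4 + (16 * c^2 * n) * (norm v)^2 + 26 * c^4 * n^2))"
  have stepB: "(\<integral>\<^sup>+\<omega>. G1 (Y2 \<omega>) \<partial>M) \<le> (\<integral>\<^sup>+\<omega>. G2f (Y1 \<omega>) \<partial>M)"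
  proof -
    have "(\<integral>\<^sup>+\<omega>. G1 (Y2 \<omega>) \<partial>M) = (\<integral>\<^sup>+\<omega>. (\<lambda>p. G1 (fst p + c *\<^sub>R snd p)) (Y1 \<omega>, Z (2*m+1) \<omega>) \<partial>M)"
      by (simp add: Y2_def)
    also have "\<dots> \<le> (\<integral>\<^sup>+\<omega>. G2f (Y1 \<omega>) \<partial>M)"
    proof (rule step_bound[OF P ind rv fresh(2) _ fresh(5) Y1m inpE_Z rv(2) Zlaw])
      show "SrcZ (2*m+1) \<noteq> SrcZ 0" by simp
      show "1 \<le> 2*m+1" by simp
      show "(\<lambda>p. G1 (fst p + c *\<^sub>R snd p)) \<in> borel_measurable (borel \<Otimes>\<^sub>M (borel :: 'd measure))" unfolding G1_def by measurable
      show "G2f \<in> borel_measurable borel" unfolding G2f_def by measurable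
      fix v :: 'd
      have "(\<integral>\<^sup>+z. ennreal ((norm (v + c *\<^sub>R z))^4 + (8 * c^2 * n) * (norm (v + c *\<^sub>R z))^2 + 9 * c^4 * n^2) \<partial>std_normal_vec)
          \<le> ennreal (((norm v)^4 + 8 * c^2 * (norm v)^2 * n + 3 * c^4 * (3 * n^2)) + (8 * c^2 * n) * ((norm v)^2 + c^2 * n) + 9 * c^4 * n^2)"
      proof (rule combine[OF std_prob])
        show "(\<lambda>z. (norm (v + c *\<^sub>R z))^4) \<in> borel_measurable std_normal_vec" by (rule std_meas) measurable
        show "(\<lambda>z. (norm (v + c *\<^sub>R z))^2) \<in> borel_measurable std_normal_vec" by (rule std_meas) measurable
        show "(\<integral>\<^sup>+z. ennreal ((norm (v + c *\<^sub>R z))^4) \<partial>std_normal_vec) \<le> ennreal ((norm v)^4 + 8 * c^2 * (norm v)^2 * n + 3 * c^4 * (3 * n^2))"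
          by (rule G4)
        show "(\<integral>\<^sup>+z. ennreal ((norm (v + c *\<^sub>R z))^2) \<partial>std_normal_vec) \<le> ennreal ((norm v)^2 + c^2 * n)"
          by (rule G2)
      qed (use nn in auto)
      also have "\<dots> = G2f v" unfolding G2f_def by (simp add: power2_eq_square power4_eq_xxxx algebra_simps)
      finally show "(\<integral>\<^sup>+z. (\<lambda>p. G1 (fst p + c *\<^sub>R snd p)) (v, z) \<partial>std_normal_vec) \<le> G2f v" by (simp add: G1_def)
    qed
    finally show ?thesis .
  qed
  define Tf where "Tf = (\<lambda>x::'d. ennreal (
              ((norm (x + (2*h) *\<^sub>R a x))^4 + 8 * (2*h)^2 * (norm (x + (2*h) *\<^sub>R a x))^2 * (q2 * (1 + (norm x)^2)) + 3 * (2*h)^4 * (q4 * (1 + (norm x)^4)))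
            + (16 * c^2 * n) * ((norm (x + (2*h) *\<^sub>R a x))^2 + (2*h)^2 * (q2 * (1 + (norm x)^2))) + 26 * c^4 * n^2))"
  have stepC: "(\<integral>\<^sup>+\<omega>. G2f (Y1 \<omega>) \<partial>M) \<le> (\<integral>\<^sup>+\<omega>. Tf (Xm \<omega>) \<partial>M)"
  proof -
    have "(\<integral>\<^sup>+\<omega>. G2f (Y1 \<omega>) \<partial>M) = (\<integral>\<^sup>+\<omega>. (\<lambda>p. G2f (fst p + (2*h) *\<^sub>R b (fst p) (snd p))) (Xm \<omega>, U j \<omega>) \<partial>M)"
      by (simp add: Y1_def)
    also have "\<dots> \<le> (\<integral>\<^sup>+\<omega>. Tf (Xm \<omega>) \<partial>M)"
    proof (rule step_bound[OF P ind rv fresh(3) _ fresh(4) XmA[OF order_refl] inpE_U rv(3) Ulaw])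
      show "SrcU j \<noteq> SrcZ 0" by simp
      show "(\<lambda>p. G2f (fst p + (2*h) *\<^sub>R b (fst p) (snd p))) \<in> borel_measurable (borel \<Otimes>\<^sub>M borel)" unfolding G2f_def by measurable
      show "Tf \<in> borel_measurable borel" unfolding Tf_def by measurable
      fix x :: 'd
      define A where "A = x + (2*h) *\<^sub>R a x"
      have eqx: "x + (2*h) *\<^sub>R b x u = A + (2*h) *\<^sub>R (b x u - a x)" for u
        by (simp add: A_def algebra_simps)
      have bx: "b x \<in> borel_measurable borel" by (rule b_fix[OF bm])
      have "(\<integral>\<^sup>+u. ennreal ((norm (A + (2*h) *\<^sub>R (b x u - a x)))^4 + (16 * c^2 * n) * (norm (A + (2*h) *\<^sub>R (b x u - a x)))^2 + 26 * c^4 * n^2) \<partial>Q)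
          \<le> ennreal (((norm A)^4 + 8 * (2*h)^2 * (norm A)^2 * (q2 * (1 + (norm x)^2)) + 3 * (2*h)^4 * (q4 * (1 + (norm x)^4)))
            + (16 * c^2 * n) * ((norm A)^2 + (2*h)^2 * (q2 * (1 + (norm x)^2))) + 26 * c^4 * n^2)"
      proof (rule combine[OF Qp])
        show "(\<lambda>u. (norm (A + (2*h) *\<^sub>R (b x u - a x)))^4) \<in> borel_measurable Q" by (rule Q_meas[OF Qs]) (use bx in measurable)
        show "(\<lambda>u. (norm (A + (2*h) *\<^sub>R (b x u - a x)))^2) \<in> borel_measurable Q" by (rule Q_meas[OF Qs]) (use bx in measurable)
        show "(\<integral>\<^sup>+u. ennreal ((norm (A + (2*h) *\<^sub>R (b x u - a x)))^4) \<partial>Q) \<le> ennreal ((norm A)^4 + 8 * (2*h)^2 * (norm A)^2 * (q2 * (1 + (norm x)^2)) + 3 * (2*h)^4 * (q4 * (1 + (norm x)^4)))"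
          by (rule N4)
        show "(\<integral>\<^sup>+u. ennreal ((norm (A + (2*h) *\<^sub>R (b x u - a x)))^2) \<partial>Q) \<le> ennreal ((norm A)^2 + (2*h)^2 * (q2 * (1 + (norm x)^2)))"
          by (rule N2)
      qed (use nn in auto)
      then show "(\<integral>\<^sup>+u. (\<lambda>p. G2f (fst p + (2*h) *\<^sub>R b (fst p) (snd p))) (x, u) \<partial>Q) \<le> Tf x"
        by (simp add: G2f_def Tf_def eqx A_def)
    qed
    finally show ?thesis .
  qed
  have "(\<integral>\<^sup>+\<omega>. ennreal ((norm (coarse_chain b \<beta> h X0 Z U off (Suc m) \<omega>))^4) \<partial>M) \<le> (\<integral>\<^sup>+\<omega>. Tf (Xm \<omega>) \<partial>M)"
    using stepA stepB stepC by (meson order_trans)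
  then show ?thesis by (simp add: Tf_def Xm_def c_def Let_def)
qed

lemma fstb[measurable]: "fst \<in> measurable (borel :: ('x::second_countable_topology \<times> 'y::second_countable_topology) measure) borel"
  by (subst borel_prod[symmetric]) (rule measurable_fst)
lemma sndb[measurable]: "snd \<in> measurable (borel :: ('x::second_countable_topology \<times> 'y::second_countable_topology) measure) borel"
  by (subst borel_prod[symmetric]) (rule measurable_snd)

lemma d_step:
  fixes a :: "'d::euclidean_space \<Rightarrow> 'd" and b :: "'d \<Rightarrow> 'u::euclidean_space \<Rightarrow> 'd"
    and M :: "'a measure" and X0 :: "'a \<Rightarrow> 'd" and Z :: "nat \<Rightarrow> 'a \<Rightarrow> 'd" and U :: "nat \<Rightarrow> 'a \<Rightarrow> 'u"
    and Q :: "'u measure"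
  assumes P: "prob_space M" and ind: "inputs_indep M X0 Z U"
    and rv: "X0 \<in> borel_measurable M" "\<And>k. Z k \<in> borel_measurable M" "\<And>k. U k \<in> borel_measurable M"
    and bm: "(\<lambda>(x, u). b x u) \<in> borel_measurable (borel \<Otimes>\<^sub>M borel)"
    and am: "a \<in> borel_measurable borel"
    and Ulaw: "\<And>j. distr M borel (U j) = Q"
    and Zlaw: "\<And>k. k \<ge> 1 \<Longrightarrow> distr M borel (Z k) = std_normal_vec"
    and N2: "\<And>x y t. (\<integral>\<^sup>+u. ennreal ((norm (y + t *\<^sub>R (b x u - a x)))^2) \<partial>Q) \<le> ennreal ((norm y)^2 + t^2 * (q2 * (1 + (norm x)^2)))"
    and N4: "\<And>x y t. (\<integral>\<^sup>+u. ennreal ((norm (y + t *\<^sub>R (b x u - a x)))^4) \<partial>Q)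
               \<le> ennreal ((norm y)^4 + 8 * t^2 * (norm y)^2 * (q2 * (1 + (norm x)^2)) + 3 * t^4 * (q4 * (1 + (norm x)^4)))"
    and G2: "\<And>y t. (\<integral>\<^sup>+z. ennreal ((norm (y + t *\<^sub>R z))^2) \<partial>(std_normal_vec :: 'd measure)) \<le> ennreal ((norm y)^2 + t^2 * n)"
    and G4: "\<And>y t. (\<integral>\<^sup>+z. ennreal ((norm (y + t *\<^sub>R z))^4) \<partial>(std_normal_vec :: 'd measure)) \<le> ennreal ((norm y)^4 + 8 * t^2 * (norm y)^2 * n + 3 * t^4 * (3 * n^2))"
    and Qp: "prob_space Q" and Qs: "sets Q = sets borel"
    and nn: "0 \<le> q2" "0 \<le> q4" "0 \<le> n"
  shows "(\<integral>\<^sup>+\<omega>. ennreal ((norm (coarse_chain b \<beta> h X0 Z U 1 (Suc m) \<omega> - coarse_chain b \<beta> h X0 Z U 0 (Suc m) \<omega>))^4) \<partial>M)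
       \<le> (\<integral>\<^sup>+\<omega>. ennreal (let p = coarse_chain b \<beta> h X0 Z U 1 m \<omega>; q = coarse_chain b \<beta> h X0 Z U 0 m \<omega>;
               A = p - q + (2*h) *\<^sub>R (a p - a q) in
              ((norm A)^4 + 8 * (-(2*h))^2 * (norm A)^2 * (q2 * (1 + (norm q)^2)) + 3 * (-(2*h))^4 * (q4 * (1 + (norm q)^4)))
            + (8 * (2*h)^2 * (q2 * (1 + (norm p)^2))) * ((norm A)^2 + (-(2*h))^2 * (q2 * (1 + (norm q)^2)))
            + 3 * (2*h)^4 * (q4 * (1 + (norm p)^4))) \<partial>M)"
proof -
  define Xp where "Xp = coarse_chain b \<beta> h X0 Z U 1 m"
  define Xq where "Xq = coarse_chain b \<beta> h X0 Z U 0 m"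
  define V1y where "V1y = (\<lambda>\<omega>. Xp \<omega> - Xq \<omega> + (2*h) *\<^sub>R a (Xp \<omega>) - (2*h) *\<^sub>R b (Xq \<omega>) (U (2*m) \<omega>))"
  define A0 where "A0 = Sset (2*m)"
  define A1 where "A1 = insert (SrcU (2*m)) A0"
  have bm': "(\<lambda>p. b (fst p) (snd p)) \<in> borel_measurable (borel \<Otimes>\<^sub>M borel)" by (rule bm_fst_snd[OF bm])
  have Ds: "coarse_chain b \<beta> h X0 Z U 1 (Suc m) \<omega> - coarse_chain b \<beta> h X0 Z U 0 (Suc m) \<omega>
      = V1y \<omega> + (2*h) *\<^sub>R (b (Xp \<omega>) (U (2*m+1) \<omega>) - a (Xp \<omega>))" for \<omega>
    by (simp add: V1y_def Xp_def Xq_def Let_def algebra_simps)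
  have XA: "coarse_chain b \<beta> h X0 Z U off m \<in> measurable (Msig M X0 Z U A) borel" if "A0 \<subseteq> A" "off \<le> 1" for A off
    by (rule chain_meas[OF bm that(2)]) (use that in \<open>simp add: A0_def\<close>)
  have V2m: "(\<lambda>\<omega>. (Xp \<omega>, Xq \<omega>)) \<in> measurable (Msig M X0 Z U A0) borel"
  proof -
    have "(\<lambda>\<omega>. (Xp \<omega>, Xq \<omega>)) \<in> measurable (Msig M X0 Z U A0) (borel \<Otimes>\<^sub>M borel)"
      unfolding Xp_def Xq_def by (intro measurable_Pair XA) auto
    then show ?thesis by (simp only: borel_prod)
  qed
  have V1m: "(\<lambda>\<omega>. (Xp \<omega>, V1y \<omega>)) \<in> measurable (Msig M X0 Z U A1) borel"
  proof -
    have "U (2*m) \<in> measurable (Msig M X0 Z U A1) borel" by (rule U_Msig) (simp add: A1_def)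
    moreover have "Xp \<in> measurable (Msig M X0 Z U A1) borel" unfolding Xp_def by (rule XA) (auto simp: A1_def)
    moreover have "Xq \<in> measurable (Msig M X0 Z U A1) borel" unfolding Xq_def by (rule XA) (auto simp: A1_def)
    ultimately have "V1y \<in> measurable (Msig M X0 Z U A1) borel" unfolding V1y_def
      by (intro borel_measurable_add borel_measurable_diff borel_measurable_scaleR borel_measurable_const
           b_comp[OF bm] measurable_compose[OF _ am])
    with \<open>Xp \<in> _\<close> have "(\<lambda>\<omega>. (Xp \<omega>, V1y \<omega>)) \<in> measurable (Msig M X0 Z U A1) (borel \<Otimes>\<^sub>M borel)"
      by (intro measurable_Pair)
    then show ?thesis by (simp only: borel_prod)
  qed
  have fresh: "SrcU (2*m+1) \<notin> A1" "SrcU (2*m) \<notin> A0" "SrcZ 0 \<notin> A0" "SrcZ 0 \<notin> A1"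
    by (auto simp: A1_def A0_def Sset_def)
  note bm'[measurable] am[measurable]
  define Gd1 where "Gd1 = (\<lambda>v::'d\<times>'d. ennreal ((norm (snd v))^4 + 8 * (2*h)^2 * (norm (snd v))^2 * (q2 * (1 + (norm (fst v))^2)) + 3 * (2*h)^4 * (q4 * (1 + (norm (fst v))^4))))"
  have step1: "(\<integral>\<^sup>+\<omega>. ennreal ((norm (coarse_chain b \<beta> h X0 Z U 1 (Suc m) \<omega> - coarse_chain b \<beta> h X0 Z U 0 (Suc m) \<omega>))^4) \<partial>M)
      \<le> (\<integral>\<^sup>+\<omega>. Gd1 (Xp \<omega>, V1y \<omega>) \<partial>M)"
  proof -
    have "(\<integral>\<^sup>+\<omega>. ennreal ((norm (coarse_chain b \<beta> h X0 Z U 1 (Suc m) \<omega> - coarse_chain b \<beta> h X0 Z U 0 (Suc m) \<omega>))^4) \<partial>M)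
        = (\<integral>\<^sup>+\<omega>. (\<lambda>p. ennreal ((norm (snd (fst p) + (2*h) *\<^sub>R (b (fst (fst p)) (snd p) - a (fst (fst p)))))^4)) ((Xp \<omega>, V1y \<omega>), U (2*m+1) \<omega>) \<partial>M)"
      unfolding Ds by simp
    also have "\<dots> \<le> (\<integral>\<^sup>+\<omega>. Gd1 (Xp \<omega>, V1y \<omega>) \<partial>M)"
    proof (rule step_bound[OF P ind rv fresh(1) _ fresh(4) V1m inpE_U rv(3) Ulaw])
      show "SrcU (2*m+1) \<noteq> SrcZ 0" by simp
      have "(\<lambda>p. b (fst (fst p)) (snd p)) \<in> borel_measurable (borel \<Otimes>\<^sub>M borel :: (('d\<times>'d)\<times>'u) measure)"
        by (rule b_comp[OF bm]) measurable
      then show "(\<lambda>p. ennreal ((norm (snd (fst p) + (2*h) *\<^sub>R (b (fst (fst p)) (snd p) - a (fst (fst p)))))^4)) \<in> borel_measurable (borel \<Otimes>\<^sub>M borel)"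
        by measurable
      show "Gd1 \<in> borel_measurable borel" unfolding Gd1_def by measurable
      fix v :: "'d \<times> 'd"
      show "(\<integral>\<^sup>+u. (\<lambda>p. ennreal ((norm (snd (fst p) + (2*h) *\<^sub>R (b (fst (fst p)) (snd p) - a (fst (fst p)))))^4)) (v, u) \<partial>Q) \<le> Gd1 v"
        using N4[of "snd v" "2*h" "fst v"] by (simp add: Gd1_def)
    qed
    finally show ?thesis .
  qed
  define TD where "TD = (\<lambda>v::'d\<times>'d. ennreal (let p = fst v; q = snd v;
               A = p - q + (2*h) *\<^sub>R (a p - a q) in
              ((norm A)^4 + 8 * (-(2*h))^2 * (norm A)^2 * (q2 * (1 + (norm q)^2)) + 3 * (-(2*h))^4 * (q4 * (1 + (norm q)^4)))
            + (8 * (2*h)^2 * (q2 * (1 + (norm p)^2))) * ((norm A)^2 + (-(2*h))^2 * (q2 * (1 + (norm q)^2)))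
            + 3 * (2*h)^4 * (q4 * (1 + (norm p)^4))))"
  have step2: "(\<integral>\<^sup>+\<omega>. Gd1 (Xp \<omega>, V1y \<omega>) \<partial>M) \<le> (\<integral>\<^sup>+\<omega>. TD (Xp \<omega>, Xq \<omega>) \<partial>M)"
  proof -
    have "(\<integral>\<^sup>+\<omega>. Gd1 (Xp \<omega>, V1y \<omega>) \<partial>M)
        = (\<integral>\<^sup>+\<omega>. (\<lambda>p. Gd1 (fst (fst p), fst (fst p) - snd (fst p) + (2*h) *\<^sub>R a (fst (fst p)) - (2*h) *\<^sub>R b (snd (fst p)) (snd p))) ((Xp \<omega>, Xq \<omega>), U (2*m) \<omega>) \<partial>M)"
      by (simp add: V1y_def)
    also have "\<dots> \<le> (\<integral>\<^sup>+\<omega>. TD (Xp \<omega>, Xq \<omega>) \<partial>M)"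
    proof (rule step_bound[OF P ind rv fresh(2) _ fresh(3) V2m inpE_U rv(3) Ulaw])
      show "SrcU (2*m) \<noteq> SrcZ 0" by simp
      have "(\<lambda>p. b (snd (fst p)) (snd p)) \<in> borel_measurable (borel \<Otimes>\<^sub>M borel :: (('d\<times>'d)\<times>'u) measure)"
        by (rule b_comp[OF bm]) measurable
      then show "(\<lambda>p. Gd1 (fst (fst p), fst (fst p) - snd (fst p) + (2*h) *\<^sub>R a (fst (fst p)) - (2*h) *\<^sub>R b (snd (fst p)) (snd p))) \<in> borel_measurable (borel \<Otimes>\<^sub>M borel)"
        unfolding Gd1_def by measurable
      show "TD \<in> borel_measurable borel" unfolding TD_def Let_def by measurable
      fix v :: "'d \<times> 'd"
      obtain p q where v: "v = (p, q)" by (cases v)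
      define A where "A = p - q + (2*h) *\<^sub>R (a p - a q)"
      have eqx: "p - q + (2*h) *\<^sub>R a p - (2*h) *\<^sub>R b q u = A + (-(2*h)) *\<^sub>R (b q u - a q)" for u
        by (simp add: A_def algebra_simps)
      have bq: "b q \<in> borel_measurable borel" by (rule b_fix[OF bm])
      define k where "k = 8 * (2*h)^2 * (q2 * (1 + (norm p)^2))"
      define k0 where "k0 = 3 * (2*h)^4 * (q4 * (1 + (norm p)^4))"
      have "(\<integral>\<^sup>+u. ennreal ((norm (A + (-(2*h)) *\<^sub>R (b q u - a q)))^4 + k * (norm (A + (-(2*h)) *\<^sub>R (b q u - a q)))^2 + k0) \<partial>Q)
          \<le> ennreal (((norm A)^4 + 8 * (-(2*h))^2 * (norm A)^2 * (q2 * (1 + (norm q)^2)) + 3 * (-(2*h))^4 * (q4 * (1 + (norm q)^4)))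
            + k * ((norm A)^2 + (-(2*h))^2 * (q2 * (1 + (norm q)^2))) + k0)"
      proof (rule combine[OF Qp])
        show "(\<lambda>u. (norm (A + (-(2*h)) *\<^sub>R (b q u - a q)))^4) \<in> borel_measurable Q" by (rule Q_meas[OF Qs]) (use bq in measurable)
        show "(\<lambda>u. (norm (A + (-(2*h)) *\<^sub>R (b q u - a q)))^2) \<in> borel_measurable Q" by (rule Q_meas[OF Qs]) (use bq in measurable)
        show "(\<integral>\<^sup>+u. ennreal ((norm (A + (-(2*h)) *\<^sub>R (b q u - a q)))^4) \<partial>Q) \<le> ennreal ((norm A)^4 + 8 * (-(2*h))^2 * (norm A)^2 * (q2 * (1 + (norm q)^2)) + 3 * (-(2*h))^4 * (q4 * (1 + (norm q)^4)))"
          by (rule N4)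
        show "(\<integral>\<^sup>+u. ennreal ((norm (A + (-(2*h)) *\<^sub>R (b q u - a q)))^2) \<partial>Q) \<le> ennreal ((norm A)^2 + (-(2*h))^2 * (q2 * (1 + (norm q)^2)))"
          by (rule N2)
      qed (use nn in \<open>auto simp: k_def k0_def\<close>)
      then show "(\<integral>\<^sup>+u. (\<lambda>p. Gd1 (fst (fst p), fst (fst p) - snd (fst p) + (2*h) *\<^sub>R a (fst (fst p)) - (2*h) *\<^sub>R b (snd (fst p)) (snd p))) (v, u) \<partial>Q) \<le> TD v"
        unfolding v by (simp add: Gd1_def TD_def eqx A_def k_def k0_def Let_def algebra_simps)
    qed
    finally show ?thesis .
  qed
  show ?thesis using order_trans[OF step1 step2] by (simp add: TD_def Xp_def Xq_def)
qed


lemma a_step: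
  fixes a :: "'d::euclidean_space \<Rightarrow> 'd" and x :: 'd
  assumes lip: "\<And>x y. norm (a x - a y) \<le> L * norm (x - y)"
    and diss: "\<And>x y. inner (x - y) (a x - a y) \<le> - K * (norm (x - y))\<^sup>2"
    and K: "0 < K" and h: "0 < h" "h \<le> 1" "8*h*L^2 \<le> K"
  shows "(norm (x + (2*h) *\<^sub>R a x))^2 \<le> (1-2*h*K)*(norm x)^2 + h*(4*(norm (a 0))^2/K + 8*(norm (a 0))^2)"
proof -
  define r where "r = (norm x)^2"
  define a0 where "a0 = norm (a 0)"
  have e: "(norm (x + (2*h) *\<^sub>R a x))^2 = r + 4*h*inner x (a x) + 4*h^2*(norm (a x))^2"
    unfolding r_def power2_norm_eq_inner by (simp add: inner_add_left inner_add_right inner_commute power2_eq_square algebra_simps)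
  have i1: "inner x (a x) \<le> -K*r + norm x * a0"
  proof -
    have "inner x (a x) = inner (x - 0) (a x - a 0) + inner x (a 0)" by (simp add: inner_diff_right)
    also have "inner (x - 0) (a x - a 0) \<le> -K*r" using diss[of x 0] by (simp add: r_def)
    also have "inner x (a 0) \<le> norm x * a0" unfolding a0_def by (rule norm_cauchy_schwarz)
    finally show ?thesis by simp
  qed
  have i2: "(norm (a x))^2 \<le> 2*a0^2 + 2*L^2*r"
  proof -
    have t1: "norm (a x) \<le> a0 + norm (a x - a 0)" unfolding a0_def by (metis norm_triangle_sub add.commute)
    have t2: "norm (a x - a 0) \<le> \<bar>L\<bar> * norm x" using lip[of x 0] by (simp add: order_trans[OF _ mult_right_mono[OF abs_ge_self]])
    from t1 t2 have "norm (a x) \<le> a0 + \<bar>L\<bar> * norm x" by linarith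
    then have "(norm (a x))^2 \<le> (a0 + \<bar>L\<bar> * norm x)^2" by (intro power_mono) auto
    also have "\<dots> \<le> 2*a0^2 + 2*(\<bar>L\<bar> * norm x)^2"
    proof -
      have "0 \<le> (a0 - \<bar>L\<bar> * norm x)^2" by simp
      then show ?thesis by (simp add: power2_eq_square algebra_simps)
    qed
    also have "(\<bar>L\<bar> * norm x)^2 = L^2*r" by (simp add: r_def power_mult_distrib)
    finally show ?thesis by (simp add: mult.assoc)
  qed
  have i3: "4*h*(norm x * a0) \<le> h*K*r + 4*h*a0^2/K"
  proof -
    have "norm x * a0 \<le> K/4*(norm x)^2 + a0^2/K"
    proof -
      have "K/4*(norm x)^2 + a0^2/K - norm x * a0 = (K*norm x - 2*a0)^2/(4*K)"
        using K by (simp add: field_simps power2_eq_square)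
      moreover have "0 \<le> (K*norm x - 2*a0)^2/(4*K)" using K by simp
      ultimately show ?thesis by linarith
    qed
    then have "(4*h)*(norm x * a0) \<le> (4*h)*(K/4*(norm x)^2 + a0^2/K)" using h by (intro mult_left_mono) auto
    then show ?thesis by (simp add: r_def algebra_simps)
  qed
  have i4: "4*h^2*(2*a0^2 + 2*L^2*r) \<le> h*K*r + 8*h*a0^2"
  proof -
    have r0: "0 \<le> r" by (simp add: r_def)
    have "(h*(8*h*L^2))*r \<le> (h*K)*r" using h r0 by (intro mult_right_mono mult_left_mono) auto
    moreover have "(h*h)*(8*a0^2) \<le> (h*1)*(8*a0^2)" using h by (intro mult_right_mono mult_left_mono) auto
    ultimately show ?thesis by (simp add: power2_eq_square algebra_simps)
  qed
  have "4*h*inner x (a x) \<le> 4*h*(-K*r + norm x * a0)" using i1 h by (intro mult_left_mono) auto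
  moreover have "4*h^2*(norm (a x))^2 \<le> 4*h^2*(2*a0^2 + 2*L^2*r)" using i2 by (intro mult_left_mono) auto
  ultimately have "(norm (x + (2*h) *\<^sub>R a x))^2 \<le> r + 4*h*(-K*r) + 4*h*(norm x * a0) + 4*h^2*(2*a0^2 + 2*L^2*r)"
    using e by (simp add: algebra_simps)
  also have "\<dots> \<le> (1-2*h*K)*r + h*(4*a0^2/K + 8*a0^2)"
    using i3 i4 by (simp add: algebra_simps)
  finally show ?thesis by (simp add: r_def a0_def)
qed

lemma d_a:
  fixes a :: "'d::euclidean_space \<Rightarrow> 'd" and p q :: 'd
  assumes lip: "\<And>x y. norm (a x - a y) \<le> L * norm (x - y)"
    and diss: "\<And>x y. inner (x - y) (a x - a y) \<le> - K * (norm (x - y))\<^sup>2"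
    and K: "0 < K" and h: "0 < h" "8*h*L^2 \<le> K"
  shows "(norm (p - q + (2*h) *\<^sub>R (a p - a q)))^2 \<le> (1-2*h*K)*(norm (p - q))^2"
proof -
  define r where "r = (norm (p - q))^2"
  have e: "(norm (p - q + (2*h) *\<^sub>R (a p - a q)))^2 = r + 4*h*inner (p - q) (a p - a q) + 4*h^2*(norm (a p - a q))^2"
    unfolding r_def power2_norm_eq_inner by (simp add: inner_add_left inner_add_right inner_commute power2_eq_square algebra_simps)
  have i2: "(norm (a p - a q))^2 \<le> L^2*r"
  proof -
    have "norm (a p - a q) \<le> \<bar>L\<bar> * norm (p - q)" using lip[of p q] by (simp add: order_trans[OF _ mult_right_mono[OF abs_ge_self]])
    then have "(norm (a p - a q))^2 \<le> (\<bar>L\<bar> * norm (p - q))^2" by (intro power_mono) auto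
    then show ?thesis by (simp add: r_def power_mult_distrib)
  qed
  have "4*h*inner (p - q) (a p - a q) \<le> 4*h*(-K*r)" using diss[of p q] h by (intro mult_left_mono) (auto simp: r_def)
  moreover have "4*h^2*(norm (a p - a q))^2 \<le> 4*h^2*(L^2*r)" using i2 by (intro mult_left_mono) auto
  moreover have "4*h^2*(L^2*r) \<le> 2*h*K*r"
  proof -
    have r0: "0 \<le> r" by (simp add: r_def)
    have hl: "0 \<le> h*L^2" using h by simp
    have "4*h*L^2 \<le> 2*K" using h(2) hl by linarith
    then have "(h*(4*h*L^2))*r \<le> (h*(2*K))*r" using h r0 by (intro mult_right_mono mult_left_mono) auto
    then show ?thesis by (simp add: power2_eq_square algebra_simps)
  qed
  ultimately show ?thesis using e unfolding r_def[symmetric] by (simp add: algebra_simps)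
qed


lemma lin3:
  fixes f1 f2 f3 :: "'a \<Rightarrow> real"
  assumes P: "prob_space M"
    and m: "f1 \<in> borel_measurable M" "f2 \<in> borel_measurable M" "f3 \<in> borel_measurable M"
    and nn: "\<And>x. 0 \<le> f1 x" "\<And>x. 0 \<le> f2 x" "\<And>x. 0 \<le> f3 x"
    and c: "0 \<le> \<alpha>" "0 \<le> \<beta>1" "0 \<le> \<gamma>1" "0 \<le> \<delta>"
    and b: "(\<integral>\<^sup>+x. ennreal (f1 x) \<partial>M) \<le> ennreal F1" "(\<integral>\<^sup>+x. ennreal (f2 x) \<partial>M) \<le> ennreal F2" "(\<integral>\<^sup>+x. ennreal (f3 x) \<partial>M) \<le> ennreal F3"
    and F: "0 \<le> F1" "0 \<le> F2" "0 \<le> F3"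
  shows "(\<integral>\<^sup>+x. ennreal (\<alpha> * f1 x + \<beta>1 * f2 x + \<gamma>1 * f3 x + \<delta>) \<partial>M) \<le> ennreal (\<alpha> * F1 + \<beta>1 * F2 + \<gamma>1 * F3 + \<delta>)"
proof -
  interpret prob_space M by (rule P)
  have me: "(\<lambda>x. ennreal (f x)) \<in> borel_measurable M" if "f \<in> borel_measurable M" for f :: "'a \<Rightarrow> real"
    using that by (rule measurable_compose) simp
  have mc: "(\<lambda>x. ennreal c * ennreal (f x)) \<in> borel_measurable M" if "f \<in> borel_measurable M" for f :: "'a \<Rightarrow> real" and c
    using me[OF that] by (rule borel_measurable_times_ennreal[OF borel_measurable_const])
  have eq: "ennreal (\<alpha> * f1 x + \<beta>1 * f2 x + \<gamma>1 * f3 x + \<delta>)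
      = ennreal \<alpha> * ennreal (f1 x) + (ennreal \<beta>1 * ennreal (f2 x) + (ennreal \<gamma>1 * ennreal (f3 x) + ennreal \<delta>))" for x
  proof -
    have a: "0 \<le> \<alpha> * f1 x" "0 \<le> \<beta>1 * f2 x" "0 \<le> \<gamma>1 * f3 x" using c nn by auto
    have "ennreal (\<alpha> * f1 x + \<beta>1 * f2 x + \<gamma>1 * f3 x + \<delta>) = ennreal (\<alpha> * f1 x) + ennreal (\<beta>1 * f2 x + \<gamma>1 * f3 x + \<delta>)"
      unfolding add.assoc by (rule ennreal_plus) (use a c in auto)
    also have "ennreal (\<beta>1 * f2 x + \<gamma>1 * f3 x + \<delta>) = ennreal (\<beta>1 * f2 x) + ennreal (\<gamma>1 * f3 x + \<delta>)"
      unfolding add.assoc by (rule ennreal_plus) (use a c in auto)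
    also have "ennreal (\<gamma>1 * f3 x + \<delta>) = ennreal (\<gamma>1 * f3 x) + ennreal \<delta>"
      by (rule ennreal_plus) (use a c in auto)
    finally show ?thesis using c nn by (simp add: ennreal_mult)
  qed
  have "(\<integral>\<^sup>+x. ennreal (\<alpha> * f1 x + \<beta>1 * f2 x + \<gamma>1 * f3 x + \<delta>) \<partial>M)
      = (\<integral>\<^sup>+x. ennreal \<alpha> * ennreal (f1 x) + (ennreal \<beta>1 * ennreal (f2 x) + (ennreal \<gamma>1 * ennreal (f3 x) + ennreal \<delta>)) \<partial>M)"
    by (simp only: eq)
  also have "\<dots> = ennreal \<alpha> * (\<integral>\<^sup>+x. ennreal (f1 x) \<partial>M) + (ennreal \<beta>1 * (\<integral>\<^sup>+x. ennreal (f2 x) \<partial>M) + (ennreal \<gamma>1 * (\<integral>\<^sup>+x. ennreal (f3 x) \<partial>M) + ennreal \<delta>))"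
    using m by (simp add: nn_integral_add mc me borel_measurable_add nn_integral_cmult emeasure_space_1)
  also have "\<dots> \<le> ennreal \<alpha> * ennreal F1 + (ennreal \<beta>1 * ennreal F2 + (ennreal \<gamma>1 * ennreal F3 + ennreal \<delta>))"
    by (intro add_mono mult_left_mono b order_refl) auto
  also have "\<dots> = ennreal (\<alpha> * F1 + \<beta>1 * F2 + \<gamma>1 * F3 + \<delta>)"
  proof -
    have a: "0 \<le> \<alpha> * F1" "0 \<le> \<beta>1 * F2" "0 \<le> \<gamma>1 * F3" using c F by auto
    have "ennreal (\<alpha> * F1 + \<beta>1 * F2 + \<gamma>1 * F3 + \<delta>) = ennreal (\<alpha> * F1) + ennreal (\<beta>1 * F2 + \<gamma>1 * F3 + \<delta>)"
      unfolding add.assoc by (rule ennreal_plus) (use a c in auto)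
    also have "ennreal (\<beta>1 * F2 + \<gamma>1 * F3 + \<delta>) = ennreal (\<beta>1 * F2) + ennreal (\<gamma>1 * F3 + \<delta>)"
      unfolding add.assoc by (rule ennreal_plus) (use a c in auto)
    also have "ennreal (\<gamma>1 * F3 + \<delta>) = ennreal (\<gamma>1 * F3) + ennreal \<delta>"
      by (rule ennreal_plus) (use a c in auto)
    finally show ?thesis using c F by (simp add: ennreal_mult)
  qed
  finally show ?thesis .
qed


theorem lemma5:
  fixes a :: "'d::euclidean_space \<Rightarrow> 'd"
    and b :: "'d \<Rightarrow> 'u::euclidean_space \<Rightarrow> 'd"
    and \<mu> :: "nat \<Rightarrow> 'u measure"
    and \<beta> L K C\<^sub>a\<^sub>1 C\<^sub>a\<^sub>2 \<kappa> L\<^sub>0 :: real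
    and \<sigma>2 \<sigma>4 :: "nat \<Rightarrow> real"
    and M :: "'a measure"
    and X0 :: "'a \<Rightarrow> 'd"
    and Z :: "nat \<Rightarrow> 'a \<Rightarrow> 'd"
    and U :: "nat \<Rightarrow> nat \<Rightarrow> 'a \<Rightarrow> 'u"
  assumes beta: "\<beta> \<ge> 0"
    \<comment> \<open>standing setting: measurability, drift laws, unbiasedness\<close>
    and a_meas: "a \<in> borel_measurable borel"
    and b_meas: "(\<lambda>(x, u). b x u) \<in> borel_measurable (borel \<Otimes>\<^sub>M borel)"
    and mu_prob: "\<And>s. s \<ge> 1 \<Longrightarrow> prob_space (\<mu> s)"
    and mu_sets: "\<And>s. s \<ge> 1 \<Longrightarrow> sets (\<mu> s) = sets borel"
    and unbiased: "\<And>s x. s \<ge> 1 \<Longrightarrow> integrable (\<mu> s) (b x) \<and> (\<integral>u. b x u \<partial>\<mu> s) = a x"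
    \<comment> \<open>(A1)\<close>
    and A1_lip: "\<And>x y. norm (a x - a y) \<le> L * norm (x - y)"
    and A1_K: "K > 0"
    and A1_diss: "\<And>x y. inner (x - y) (a x - a y) \<le> - K * (norm (x - y))\<^sup>2"
    and A1_C2: "\<exists>a' :: 'd \<Rightarrow> 'd \<Rightarrow>\<^sub>L 'd. \<exists>a'' :: 'd \<Rightarrow> 'd \<Rightarrow>\<^sub>L ('d \<Rightarrow>\<^sub>L 'd).
                  (\<forall>x. (a has_derivative blinfun_apply (a' x)) (at x))
                \<and> (\<forall>x. (a' has_derivative blinfun_apply (a'' x)) (at x))
                \<and> continuous_on UNIV a''
                \<and> (\<forall>x. \<forall>i\<in>Basis. norm (blinfun_apply (a' x) i) \<le> C\<^sub>a\<^sub>1)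
                \<and> (\<forall>x. \<forall>i\<in>Basis. \<forall>j\<in>Basis. norm (blinfun_apply (blinfun_apply (a'' x) i) j) \<le> C\<^sub>a\<^sub>2)"
    \<comment> \<open>(A3)\<close>
    and A3: "\<And>s x. s \<ge> 1 \<Longrightarrow>
               (\<integral>\<^sup>+u. ennreal ((norm (b x u - a x))^2) \<partial>\<mu> s) \<le> ennreal (\<sigma>2 s * (1 + (norm x)^2))"
    and A3_rate: "\<And>s. s \<ge> 1 \<Longrightarrow> \<sigma>2 s \<le> \<kappa> / real s"
    \<comment> \<open>(A4)\<close>
    and A4: "\<And>s x. s \<ge> 1 \<Longrightarrow>
               (\<integral>\<^sup>+u. ennreal ((norm (b x u - a x))^4) \<partial>\<mu> s) \<le> ennreal (\<sigma>4 s * (1 + (norm x)^4))"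
    and A4_rate: "\<And>s. s \<ge> 1 \<Longrightarrow> \<sigma>4 s \<le> \<kappa> / (real s)^2"
    \<comment> \<open>(A7)\<close>
    and A7: "\<And>x. (norm (a x))^4 \<le> L\<^sub>0 * (1 + (norm x)^4)"
    \<comment> \<open>random inputs of the coupled chains (U s k = U^f_k at level 2s)\<close>
    and M_prob: "prob_space M"
    and X0_rv: "X0 \<in> borel_measurable M"
    and X0_moment: "(\<integral>\<^sup>+\<omega>. ennreal ((norm (X0 \<omega>))^4) \<partial>M) < \<infinity>"
    and Z_rv: "\<And>k. Z k \<in> borel_measurable M"
    and Z_law: "\<And>k. k \<ge> 1 \<Longrightarrow> distr M borel (Z k) = std_normal_vec"
    and U_rv: "\<And>s k. U s k \<in> borel_measurable M"
    and U_law: "\<And>s k. s \<ge> 1 \<Longrightarrow> distr M borel (U s k) = \<mu> (2 * s)"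
    and indep: "\<And>s. s \<ge> 1 \<Longrightarrow> inputs_indep M X0 Z (U s)"
  shows "\<exists>h0 > 0. \<exists>C > 0. \<forall>s h k. s \<ge> 1 \<longrightarrow> 0 < h \<longrightarrow> h < h0 \<longrightarrow> even k \<longrightarrow> k \<ge> 2 \<longrightarrow>
           (\<integral>\<^sup>+\<omega>. ennreal ((norm (coarse_chain b \<beta> h X0 Z (U s) 1 (k div 2) \<omega>
                                   - coarse_chain b \<beta> h X0 Z (U s) 0 (k div 2) \<omega>))^4) \<partial>M)
             \<le> ennreal (C * h^2 / (real s)^2)"
proof -
  define n where "n = real DIM('d)"
  define kp where "kp = max \<kappa> 1"
  define G where "G = 4*(norm (a 0))^2/K + 8*(norm (a 0))^2"
  define bb where "bb = \<beta>^2"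
  define Cm where "Cm = (G^2 + 32*kp*G + 48*kp + 16*bb*n*(G+4*kp) + 26*bb^2*n^2) + (2*G + 32*kp*(1+G) + 16*bb*n*(1+4*kp))^2/(2*K)"
  define E0 where "E0 = enn2real (\<integral>\<^sup>+\<omega>. ennreal ((norm (X0 \<omega>))^4) \<partial>M)"
  define Mb where "Mb = max E0 (Cm/K)"
  define Cd where "Cd = 384*kp^2/K + 48*kp^2 + 12*kp"
  define Cf where "Cf = Cd*(2+2*Mb)/K"
  define h0 where "h0 = min 1 (min (1/(2*K)) (min (K/(8*L^2+1)) (K/(160*kp))))"
  have kp: "1 \<le> kp" by (simp add: kp_def)
  have K: "0 < K" by (rule A1_K)
  have n0: "0 \<le> n" by (simp add: n_def)
  have G0: "0 \<le> G" using K by (simp add: G_def)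
  have bb0: "0 \<le> bb" by (simp add: bb_def)
  have Cm0: "0 \<le> Cm" unfolding Cm_def using K kp n0 G0 bb0 by (intro add_nonneg_nonneg mult_nonneg_nonneg divide_nonneg_nonneg) auto
  have E00: "0 \<le> E0" by (simp add: E0_def)
  have E0eq: "(\<integral>\<^sup>+\<omega>. ennreal ((norm (X0 \<omega>))^4) \<partial>M) = ennreal E0" using X0_moment by (simp add: E0_def)
  have Mb: "0 \<le> Mb" "E0 \<le> Mb" "Cm/K \<le> Mb" using E00 by (auto simp: Mb_def)
  have Cd0: "0 < Cd" unfolding Cd_def using K kp by (intro add_nonneg_pos) auto
  have Cf0: "0 < Cf" unfolding Cf_def using Cd0 Mb K by auto
  have h00: "0 < h0" unfolding h0_def using K kp by (auto intro!: divide_pos_pos add_nonneg_pos)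
  have key: "(\<integral>\<^sup>+\<omega>. ennreal ((norm (coarse_chain b \<beta> h X0 Z (U s) 1 m \<omega> - coarse_chain b \<beta> h X0 Z (U s) 0 m \<omega>))^4) \<partial>M)
             \<le> ennreal (Cf * h^2 / (real s)^2)"
    if s: "1 \<le> s" and h: "0 < h" "h < h0" for s h m
  proof -
    have h1: "h \<le> 1" using h by (simp add: h0_def)
    have h2: "2*h*K \<le> 1"
    proof -
      have "h < 1/(2*K)" using h by (simp add: h0_def)
      then show ?thesis using K by (simp add: field_simps)
    qed
    have h3: "8*h*L^2 \<le> K"
    proof -
      have "h < K/(8*L^2+1)" using h by (simp add: h0_def)
      moreover have D: "0 < 8*L^2+1" by (simp add: add_nonneg_pos)
      ultimately have "h*(8*L^2+1) < K" using pos_less_divide_eq[OF D] by blast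
      then show ?thesis using h by (simp add: algebra_simps)
    qed
    have h4: "160*h*kp \<le> K"
    proof -
      have "h < K/(160*kp)" using h by (simp add: h0_def)
      then show ?thesis using kp by (simp add: field_simps)
    qed
    define Q where "Q = \<mu> (2 * s)"
    have s2: "1 \<le> 2 * s" using s by simp
    have Qp: "prob_space Q" unfolding Q_def by (rule mu_prob[OF s2])
    have Qs: "sets Q = sets borel" unfolding Q_def by (rule mu_sets[OF s2])
    define e where "e = 1 / real s"
    define q2 where "q2 = kp*e/2"
    define q4 where "q4 = kp*e^2/4"
    have e: "0 < e" "e \<le> 1" using s by (auto simp: e_def)
    have q2: "0 \<le> q2" "q2 \<le> kp" using e kp by (auto simp: q2_def)
    have q4: "0 \<le> q4" "q4 \<le> kp"
    proof -
      have "e^2 \<le> 1" using e by (simp add: power_le_one)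
      then show "0 \<le> q4" "q4 \<le> kp" using kp e by (auto simp: q4_def)
    qed
    have sig2: "\<sigma>2 (2 * s) \<le> q2"
    proof -
      have "\<sigma>2 (2 * s) \<le> \<kappa> / real (2 * s)" by (rule A3_rate[OF s2])
      also have "\<dots> \<le> kp / real (2 * s)" using s by (intro divide_right_mono) (auto simp: kp_def)
      also have "\<dots> = q2" by (simp add: q2_def e_def)
      finally show ?thesis .
    qed
    have sig4: "\<sigma>4 (2 * s) \<le> q4"
    proof -
      have "\<sigma>4 (2 * s) \<le> \<kappa> / (real (2 * s))^2" by (rule A4_rate[OF s2])
      also have "\<dots> \<le> kp / (real (2 * s))^2" using s by (intro divide_right_mono) (auto simp: kp_def)
      also have "\<dots> = q4" by (simp add: q4_def e_def power2_eq_square)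
      finally show ?thesis .
    qed
    have Bm: "(\<lambda>u. b x u - a x) \<in> borel_measurable Q" for x
      by (rule Q_meas[OF Qs]) (intro borel_measurable_diff b_fix[OF b_meas] borel_measurable_const)
    have Bi: "integrable Q (\<lambda>u. b x u - a x)" for x
    proof -
      interpret prob_space Q by (rule Qp)
      have "integrable Q (b x)" using unbiased[OF s2, of x] by (simp add: Q_def)
      then show ?thesis by (intro Bochner_Integration.integrable_diff) auto
    qed
    have B0: "(\<integral>u. b x u - a x \<partial>Q) = 0" for x
    proof -
      interpret prob_space Q by (rule Qp)
      have ub: "integrable Q (b x)" "(\<integral>u. b x u \<partial>Q) = a x" using unbiased[OF s2, of x] by (simp_all add: Q_def)
      have "(\<integral>u. b x u - a x \<partial>Q) = (\<integral>u. b x u \<partial>Q) - (\<integral>u. a x \<partial>Q)"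
        using ub by (intro Bochner_Integration.integral_diff) auto
      also have "\<dots> = 0" using ub by (simp add: prob_space)
      finally show ?thesis .
    qed
    have B2: "(\<integral>\<^sup>+u. ennreal ((norm (b x u - a x))^2) \<partial>Q) \<le> ennreal (q2 * (1 + (norm x)^2))" for x
    proof -
      have "(\<integral>\<^sup>+u. ennreal ((norm (b x u - a x))^2) \<partial>Q) \<le> ennreal (\<sigma>2 (2 * s) * (1 + (norm x)^2))"
        unfolding Q_def by (rule A3[OF s2])
      also have "\<dots> \<le> ennreal (q2 * (1 + (norm x)^2))"
        using sig2 by (intro ennreal_leI mult_right_mono) auto
      finally show ?thesis .
    qed
    have B4: "(\<integral>\<^sup>+u. ennreal ((norm (b x u - a x))^4) \<partial>Q) \<le> ennreal (q4 * (1 + (norm x)^4))" for x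
    proof -
      have "(\<integral>\<^sup>+u. ennreal ((norm (b x u - a x))^4) \<partial>Q) \<le> ennreal (\<sigma>4 (2 * s) * (1 + (norm x)^4))"
        unfolding Q_def by (rule A4[OF s2])
      also have "\<dots> \<le> ennreal (q4 * (1 + (norm x)^4))"
        using sig4 by (intro ennreal_leI mult_right_mono) auto
      finally show ?thesis .
    qed
    have N2: "(\<integral>\<^sup>+u. ennreal ((norm (y + t *\<^sub>R (b x u - a x)))^2) \<partial>Q) \<le> ennreal ((norm y)^2 + t^2 * (q2 * (1 + (norm x)^2)))" for x y t
      by (rule moment_bounds(1)[OF Qp Bm Bi B0 B2 B4]) (use q2 q4 in auto)
    have N4: "(\<integral>\<^sup>+u. ennreal ((norm (y + t *\<^sub>R (b x u - a x)))^4) \<partial>Q)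
               \<le> ennreal ((norm y)^4 + 8 * t^2 * (norm y)^2 * (q2 * (1 + (norm x)^2)) + 3 * t^4 * (q4 * (1 + (norm x)^4)))" for x y t
      by (rule moment_bounds(2)[OF Qp Bm Bi B0 B2 B4]) (use q2 q4 in auto)
    have Gm: "(\<lambda>z. z) \<in> borel_measurable (std_normal_vec :: 'd measure)" by (rule std_meas) simp
    have Gs2: "(\<integral>\<^sup>+z. ennreal ((norm z)^2) \<partial>(std_normal_vec :: 'd measure)) \<le> ennreal n"
      by (simp add: std_mom2 n_def)
    have Gs4: "(\<integral>\<^sup>+z. ennreal ((norm z)^4) \<partial>(std_normal_vec :: 'd measure)) \<le> ennreal (3 * n^2)"
      unfolding n_def by (rule std_mom4)
    have G2: "(\<integral>\<^sup>+z. ennreal ((norm (y + t *\<^sub>R z))^2) \<partial>(std_normal_vec :: 'd measure)) \<le> ennreal ((norm y)^2 + t^2 * n)" for y t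
      by (rule moment_bounds(1)[OF std_prob Gm std_mean Gs2 Gs4]) (use n0 in auto)
    have G4: "(\<integral>\<^sup>+z. ennreal ((norm (y + t *\<^sub>R z))^4) \<partial>(std_normal_vec :: 'd measure)) \<le> ennreal ((norm y)^4 + 8 * t^2 * (norm y)^2 * n + 3 * t^4 * (3 * n^2))" for y t
      by (rule moment_bounds(2)[OF std_prob Gm std_mean Gs2 Gs4]) (use n0 in auto)
    have ind: "inputs_indep M X0 Z (U s)" by (rule indep[OF s])
    have Ulaw: "distr M borel (U s j) = Q" for j unfolding Q_def by (rule U_law[OF s])
    have XM: "coarse_chain b \<beta> h X0 Z (U s) off m \<in> borel_measurable M" if "off \<le> 1" for off m
      by (rule Msig_meas_M[OF X0_rv Z_rv U_rv[of s]]) (rule chain_meas[OF b_meas that order_refl])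
    have p4: "(y::real)^4 = (y^2)^2" for y by (simp add: power_mult[symmetric])
    have c2eq: "(\<beta> * sqrt h)^2 = bb*h" using h by (simp add: bb_def power_mult_distrib)
    have c4eq: "(\<beta> * sqrt h)^4 = (bb*h)^2" using c2eq by (simp add: p4[of "\<beta> * sqrt h"])
    have mompt: "((norm (x + (2*h) *\<^sub>R a x))^4 + 8 * (2*h)^2 * (norm (x + (2*h) *\<^sub>R a x))^2 * (q2 * (1 + (norm x)^2)) + 3 * (2*h)^4 * (q4 * (1 + (norm x)^4)))
            + (16 * (\<beta> * sqrt h)^2 * n) * ((norm (x + (2*h) *\<^sub>R a x))^2 + (2*h)^2 * (q2 * (1 + (norm x)^2))) + 26 * (\<beta> * sqrt h)^4 * n^2
          \<le> (1-h*K)*(norm x)^4 + h*Cm" for x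
    proof -
      define Asq where "Asq = (norm (x + (2*h) *\<^sub>R a x))^2"
      define r where "r = (norm x)^2"
      have AB: "Asq \<le> (1-2*h*K)*r + h*G" unfolding Asq_def r_def G_def
        by (rule a_step[OF A1_lip A1_diss K h(1) h1 h3])
      have P: "Asq^2 + 8*(2*h)^2*Asq*(q2*(1+r)) + 3*(2*h)^4*(q4*(1+r^2)) + (16*(bb*h)*n)*(Asq + (2*h)^2*(q2*(1+r))) + 26*(bb*h)^2*n^2
         \<le> (1-h*K)*r^2 + h*Cm" unfolding Cm_def
        by (rule mom_poly[OF _ _ AB h(1) h1 h2 h4 K G0 _ q2 q4 n0 refl bb0]) (use kp in \<open>auto simp: Asq_def r_def\<close>)
      show ?thesis unfolding c2eq c4eq p4[of "norm (x + (2*h) *\<^sub>R a x)"] p4[of "norm x"]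
        by (rule P[unfolded Asq_def r_def])
    qed
    have mom: "(\<integral>\<^sup>+\<omega>. ennreal ((norm (coarse_chain b \<beta> h X0 Z (U s) off m \<omega>))^4) \<partial>M) \<le> ennreal Mb" if off: "off \<le> 1" for off m
    proof (induction m)
      case 0
      then show ?case using E0eq Mb by (simp add: ennreal_leI)
    next
      case (Suc m)
      have "(\<integral>\<^sup>+\<omega>. ennreal ((norm (coarse_chain b \<beta> h X0 Z (U s) off (Suc m) \<omega>))^4) \<partial>M)
         \<le> (\<integral>\<^sup>+\<omega>. ennreal (let x = coarse_chain b \<beta> h X0 Z (U s) off m \<omega>; A = x + (2*h) *\<^sub>R a x; c = \<beta> * sqrt h in
              ((norm A)^4 + 8 * (2*h)^2 * (norm A)^2 * (q2 * (1 + (norm x)^2)) + 3 * (2*h)^4 * (q4 * (1 + (norm x)^4)))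
            + (16 * c^2 * n) * ((norm A)^2 + (2*h)^2 * (q2 * (1 + (norm x)^2))) + 26 * c^4 * n^2) \<partial>M)"
        by (rule mom_step[OF M_prob ind X0_rv Z_rv U_rv[of s] b_meas a_meas off Ulaw Z_law N2 N4 G2 G4 Qp Qs q2(1) q4(1) n0])
      also have "\<dots> \<le> (\<integral>\<^sup>+\<omega>. ennreal ((1-h*K) * (norm (coarse_chain b \<beta> h X0 Z (U s) off m \<omega>))^4
            + 0 * (norm (coarse_chain b \<beta> h X0 Z (U s) off m \<omega>))^4 + 0 * (norm (coarse_chain b \<beta> h X0 Z (U s) off m \<omega>))^4 + h*Cm) \<partial>M)"
      proof (rule nn_integral_mono)
        fix \<omega>
        show "ennreal (let x = coarse_chain b \<beta> h X0 Z (U s) off m \<omega>; A = x + (2*h) *\<^sub>R a x; c = \<beta> * sqrt h in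
              ((norm A)^4 + 8 * (2*h)^2 * (norm A)^2 * (q2 * (1 + (norm x)^2)) + 3 * (2*h)^4 * (q4 * (1 + (norm x)^4)))
            + (16 * c^2 * n) * ((norm A)^2 + (2*h)^2 * (q2 * (1 + (norm x)^2))) + 26 * c^4 * n^2)
          \<le> ennreal ((1-h*K) * (norm (coarse_chain b \<beta> h X0 Z (U s) off m \<omega>))^4
            + 0 * (norm (coarse_chain b \<beta> h X0 Z (U s) off m \<omega>))^4 + 0 * (norm (coarse_chain b \<beta> h X0 Z (U s) off m \<omega>))^4 + h*Cm)"
          unfolding Let_def using mompt[of "coarse_chain b \<beta> h X0 Z (U s) off m \<omega>"] by (intro ennreal_leI) simp
      qed
      also have "\<dots> \<le> ennreal ((1-h*K) * Mb + 0 * Mb + 0 * Mb + h*Cm)"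
        by (rule lin3[OF M_prob]) (use XM[OF off] Suc.IH h h2 K Cm0 Mb in auto)
      also have "\<dots> \<le> ennreal Mb"
      proof (rule ennreal_leI)
        have "Cm \<le> K*Mb" using Mb(3) K by (simp add: field_simps)
        then have "h*Cm \<le> h*(K*Mb)" using h by (intro mult_left_mono) auto
        then show "(1-h*K) * Mb + 0 * Mb + 0 * Mb + h*Cm \<le> Mb" by (simp add: algebra_simps)
      qed
      finally show ?case .
    qed
    define \<gamma> where "\<gamma> = h^3*e^2*Cd"
    have \<gamma>0: "0 \<le> \<gamma>" unfolding \<gamma>_def using h e Cd0 by auto
    have dpt: "((norm (p - q + (2*h) *\<^sub>R (a p - a q)))^4 + 8 * (-(2*h))^2 * (norm (p - q + (2*h) *\<^sub>R (a p - a q)))^2 * (q2 * (1 + (norm q)^2)) + 3 * (-(2*h))^4 * (q4 * (1 + (norm q)^4)))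
            + (8 * (2*h)^2 * (q2 * (1 + (norm p)^2))) * ((norm (p - q + (2*h) *\<^sub>R (a p - a q)))^2 + (-(2*h))^2 * (q2 * (1 + (norm q)^2)))
            + 3 * (2*h)^4 * (q4 * (1 + (norm p)^4))
          \<le> (1-h*K) * (norm (p - q))^4 + \<gamma> * (norm p)^4 + \<gamma> * (norm q)^4 + 2*\<gamma>" for p q
    proof -
      define Asq where "Asq = (norm (p - q + (2*h) *\<^sub>R (a p - a q)))^2"
      define pp where "pp = (norm (p - q))^2"
      define P2 where "P2 = (norm p)^2"
      define Q2 where "Q2 = (norm q)^2"
      have AB: "Asq \<le> (1-2*h*K)*pp" unfolding Asq_def pp_def
        by (rule d_a[OF A1_lip A1_diss K h(1) h3])
      have P: "(Asq^2 + 8*(-(2*h))^2*Asq*(q2*(1+Q2)) + 3*(-(2*h))^4*(q4*(1+Q2^2)))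
          + (8*(2*h)^2*(q2*(1+P2)))*(Asq + (-(2*h))^2*(q2*(1+Q2))) + 3*(2*h)^4*(q4*(1+P2^2))
       \<le> (1-h*K)*pp^2 + h^3*e^2*((384*kp^2/K + 48*kp^2 + 12*kp)*(2+P2^2+Q2^2))"
        by (rule d_poly[OF _ _ AB h(1) h1 h2 K]) (use kp e q2 q4 in \<open>auto simp: Asq_def pp_def P2_def Q2_def q2_def q4_def\<close>)
      have R: "(1-h*K)*pp^2 + h^3*e^2*((384*kp^2/K + 48*kp^2 + 12*kp)*(2+P2^2+Q2^2))
          = (1-h*K) * (norm (p - q))^4 + \<gamma> * (norm p)^4 + \<gamma> * (norm q)^4 + 2*\<gamma>"
        unfolding \<gamma>_def Cd_def pp_def P2_def Q2_def p4[of "norm (p - q)"] p4[of "norm p"] p4[of "norm q"]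
        by (simp add: algebra_simps add_divide_distrib)
      have "((norm (p - q + (2*h) *\<^sub>R (a p - a q)))^4 + 8 * (-(2*h))^2 * (norm (p - q + (2*h) *\<^sub>R (a p - a q)))^2 * (q2 * (1 + (norm q)^2)) + 3 * (-(2*h))^4 * (q4 * (1 + (norm q)^4)))
            + (8 * (2*h)^2 * (q2 * (1 + (norm p)^2))) * ((norm (p - q + (2*h) *\<^sub>R (a p - a q)))^2 + (-(2*h))^2 * (q2 * (1 + (norm q)^2)))
            + 3 * (2*h)^4 * (q4 * (1 + (norm p)^4))
          \<le> (1-h*K)*pp^2 + h^3*e^2*((384*kp^2/K + 48*kp^2 + 12*kp)*(2+P2^2+Q2^2))"
        unfolding pp_def P2_def Q2_def p4[of "norm (p - q + (2*h) *\<^sub>R (a p - a q))"] p4[of "norm p"] p4[of "norm q"]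
        by (rule P[unfolded Asq_def pp_def P2_def Q2_def])
      then show ?thesis unfolding R .
    qed
    have Dm: "(\<integral>\<^sup>+\<omega>. ennreal ((norm (coarse_chain b \<beta> h X0 Z (U s) 1 m \<omega> - coarse_chain b \<beta> h X0 Z (U s) 0 m \<omega>))^4) \<partial>M)
        \<le> ennreal (Cd*(2+2*Mb)*h^2*e^2/K)" for m
    proof (induction m)
      case 0
      then show ?case by simp
    next
      case (Suc m)
      let ?P = "coarse_chain b \<beta> h X0 Z (U s) 1 m" and ?Q = "coarse_chain b \<beta> h X0 Z (U s) 0 m"
      have "(\<integral>\<^sup>+\<omega>. ennreal ((norm (coarse_chain b \<beta> h X0 Z (U s) 1 (Suc m) \<omega> - coarse_chain b \<beta> h X0 Z (U s) 0 (Suc m) \<omega>))^4) \<partial>M)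
         \<le> (\<integral>\<^sup>+\<omega>. ennreal (let p = ?P \<omega>; q = ?Q \<omega>;
               A = p - q + (2*h) *\<^sub>R (a p - a q) in
              ((norm A)^4 + 8 * (-(2*h))^2 * (norm A)^2 * (q2 * (1 + (norm q)^2)) + 3 * (-(2*h))^4 * (q4 * (1 + (norm q)^4)))
            + (8 * (2*h)^2 * (q2 * (1 + (norm p)^2))) * ((norm A)^2 + (-(2*h))^2 * (q2 * (1 + (norm q)^2)))
            + 3 * (2*h)^4 * (q4 * (1 + (norm p)^4))) \<partial>M)"
        by (rule d_step[OF M_prob ind X0_rv Z_rv U_rv[of s] b_meas a_meas Ulaw Z_law N2 N4 G2 G4 Qp Qs q2(1) q4(1) n0])
      also have "\<dots> \<le> (\<integral>\<^sup>+\<omega>. ennreal ((1-h*K) * (norm (?P \<omega> - ?Q \<omega>))^4 + \<gamma> * (norm (?P \<omega>))^4 + \<gamma> * (norm (?Q \<omega>))^4 + 2*\<gamma>) \<partial>M)"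
      proof (rule nn_integral_mono)
        fix \<omega>
        show "ennreal (let p = ?P \<omega>; q = ?Q \<omega>;
               A = p - q + (2*h) *\<^sub>R (a p - a q) in
              ((norm A)^4 + 8 * (-(2*h))^2 * (norm A)^2 * (q2 * (1 + (norm q)^2)) + 3 * (-(2*h))^4 * (q4 * (1 + (norm q)^4)))
            + (8 * (2*h)^2 * (q2 * (1 + (norm p)^2))) * ((norm A)^2 + (-(2*h))^2 * (q2 * (1 + (norm q)^2)))
            + 3 * (2*h)^4 * (q4 * (1 + (norm p)^4)))
          \<le> ennreal ((1-h*K) * (norm (?P \<omega> - ?Q \<omega>))^4 + \<gamma> * (norm (?P \<omega>))^4 + \<gamma> * (norm (?Q \<omega>))^4 + 2*\<gamma>)"
          unfolding Let_def by (intro ennreal_leI dpt)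
      qed
      also have "\<dots> \<le> ennreal ((1-h*K) * (Cd*(2+2*Mb)*h^2*e^2/K) + \<gamma> * Mb + \<gamma> * Mb + 2*\<gamma>)"
      proof (rule lin3[OF M_prob])
        show "(\<lambda>\<omega>. (norm (?P \<omega> - ?Q \<omega>))^4) \<in> borel_measurable M" using XM[of 1 m] XM[of 0 m] by measurable
        show "(\<lambda>\<omega>. (norm (?P \<omega>))^4) \<in> borel_measurable M" using XM[of 1 m] by measurable
        show "(\<lambda>\<omega>. (norm (?Q \<omega>))^4) \<in> borel_measurable M" using XM[of 0 m] by measurable
        show "(\<integral>\<^sup>+\<omega>. ennreal ((norm (?P \<omega>))^4) \<partial>M) \<le> ennreal Mb" by (rule mom) simp
        show "(\<integral>\<^sup>+\<omega>. ennreal ((norm (?Q \<omega>))^4) \<partial>M) \<le> ennreal Mb" by (rule mom) simp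
        show "(\<integral>\<^sup>+\<omega>. ennreal ((norm (?P \<omega> - ?Q \<omega>))^4) \<partial>M) \<le> ennreal (Cd*(2+2*Mb)*h^2*e^2/K)" by (rule Suc.IH)
      qed (use h h2 K \<gamma>0 Mb Cd0 in auto)
      also have "(1-h*K) * (Cd*(2+2*Mb)*h^2*e^2/K) + \<gamma> * Mb + \<gamma> * Mb + 2*\<gamma> = Cd*(2+2*Mb)*h^2*e^2/K"
        using K unfolding \<gamma>_def by (simp add: field_simps power2_eq_square power3_eq_cube)
      finally show ?case .
    qed
    have "Cd*(2+2*Mb)*h^2*e^2/K = Cf * h^2 / (real s)^2"
      unfolding Cf_def e_def by (simp add: field_simps)
    then show ?thesis using Dm[of m] by simp
  qed
  show ?thesis
    apply (rule exI[of _ h0])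
    apply (intro conjI h00)
    apply (rule exI[of _ Cf])
    apply (intro conjI Cf0 allI impI)
    apply (rule key)
      apply auto
    done
qed


end
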